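(* In the setting described in the context, let $\bar W=\mathbb{E}[W(k)]$. Then $\bar W$ is doubly stochastic with $\lambda_{\max}(\bar W)=1$, and, with $Q(k)=W(k)-H\bar H W(k)$ and $\gamma=\lambda_{\max}\big(\mathbb{E}[Q(k)^TQ(k)]\big)$, one has $\gamma=\lambda_2(\bar W)$, where $\lambda_2(\bar W):=\max_{\lambda\neq 1}\lambda(\bar W)$ is the largest eigenvalue of $\bar W$ different from $1$.
   Context: Let $V=\{1,\ldots,N\}$, $N\ge 2$, and let $G_I=(V,E_I)$ be a connected undirected graph which is not complete, with adjacency matrix $A$; let $B=A+I_N$. For $i\in V$ let $N_I(i)$ be the set of neighbors of $i$ in $G_I$, $\tilde N_I(i)=N_I(i)\cup\{i\}$, $m_i=\deg_{G_I}(i)+1$, $m=\sum_{i=1}^N m_i$. For $i,j\in V$ set $s_{ij}=\sum_{l=1}^{j}B(i,l)+\sum_{r=1}^{i-1}m_r$ (the last sum is $0$ for $i=1$). Let $e_1,\ldots,e_m$ be the standard basis of $\mathbb{R}^m$ and define $E_j^i=e_{s_{ij}}$ if $j\in\tilde N_I(i)$ and $E_j^i=\mathbf{0}_m$ otherwise. Let $H=\big[\sum_{i=1}^N E_1^i,\ldots,\sum_{i=1}^N E_N^i\big]\in\mathbb{R}^{m\times N}$ and $\bar H=\mathrm{diag}(1/m_1,\ldots,1/m_N)H^T$. Let $G_C=(V,E_C)$ be a communication graph with $G_m\subseteq G_C\subseteq G_I$, where $G_m$ is a maximal triangle-free spanning subgraph of $G_I$ (a triangle-free spanning subgraph such that adding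 any edge of $G_I$ not in it creates a triangle); $N_C(i)$ denotes the neighbors of $i$ in $G_C$. For $i,j\in V$ let $\mathrm{ind}(i,j)=\tilde N_I(i)\cap\tilde N_I(j)$ and $W_{ij}=I_m-\tfrac12\sum_{l\in \mathrm{ind}(i,j)}(E_l^{i}-E_l^{j})(E_l^{i}-E_l^{j})^T$. The random matrix $W(k)$ is $W_{i_kj_k}$, where $i_k$ is drawn uniformly at random from $V$ and then $j_k$ is drawn uniformly at random from $N_C(i_k)$; expectations are with respect to this random choice. *)

theory Defs
  imports "Jordan_Normal_Form.Char_Poly"
begin

definition simple_graph :: "nat \<Rightarrow> nat set set \<Rightarrow> bool" where
  "simple_graph N E \<longleftrightarrow>
     (\<forall>e\<in>E. \<exists>i j. i \<in> {1..N} \<and> j \<in> {1..N} \<and> i \<noteq> j \<and> e = {i, j})"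

definition graph_connected :: "nat \<Rightarrow> nat set set \<Rightarrow> bool" where
  "graph_connected N E \<longleftrightarrow>
     (\<forall>i\<in>{1..N}. \<forall>j\<in>{1..N}. (i, j) \<in> {(a, b). {a, b} \<in> E}\<^sup>*)"

definition graph_complete :: "nat \<Rightarrow> nat set set \<Rightarrow> bool" where
  "graph_complete N E \<longleftrightarrow>
     (\<forall>i\<in>{1..N}. \<forall>j\<in>{1..N}. i \<noteq> j \<longrightarrow> {i, j} \<in> E)"

definition triangle_free :: "nat set set \<Rightarrow> bool" where
  "triangle_free E \<longleftrightarrow>
     \<not> (\<exists>a b c. a \<noteq> b \<and> b \<noteq> c \<and> a \<noteq> c \<and> {a, b} \<in> E \<and> {b, c} \<in> E \<and> {a, c} \<in> E)"

text \<open>Maximal triangle-free spanning subgraph Em of the graph with edge set E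
  (spanning: same vertex set {1..N}, which is built into the representation).\<close>
definition max_triangle_free_spanning :: "nat set set \<Rightarrow> nat set set \<Rightarrow> bool" where
  "max_triangle_free_spanning E Em \<longleftrightarrow>
     Em \<subseteq> E \<and> triangle_free Em \<and> (\<forall>e \<in> E - Em. \<not> triangle_free (insert e Em))"

definition nbrs :: "nat \<Rightarrow> nat set set \<Rightarrow> nat \<Rightarrow> nat set" where
  "nbrs N E i = {j \<in> {1..N}. {i, j} \<in> E}"

definition cnbrs :: "nat \<Rightarrow> nat set set \<Rightarrow> nat \<Rightarrow> nat set" where
  "cnbrs N E i = insert i (nbrs N E i)"

definition mdeg :: "nat \<Rightarrow> nat set set \<Rightarrow> nat \<Rightarrow> nat" where
  "mdeg N E i = card (nbrs N E i) + 1"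

definition mtot :: "nat \<Rightarrow> nat set set \<Rightarrow> nat" where
  "mtot N E = (\<Sum>i = 1..N. mdeg N E i)"

text \<open>B = A + I, the adjacency matrix plus identity (entries indexed by vertices).\<close>
definition Bent :: "nat \<Rightarrow> nat set set \<Rightarrow> nat \<Rightarrow> nat \<Rightarrow> nat" where
  "Bent N E i l = (if l \<in> cnbrs N E i then 1 else 0)"

definition sidx :: "nat \<Rightarrow> nat set set \<Rightarrow> nat \<Rightarrow> nat \<Rightarrow> nat" where
  "sidx N E i j = (\<Sum>l = 1..j. Bent N E i l) + (\<Sum>r = 1..<i. mdeg N E r)"

text \<open>E^i_j = e_{s_ij} (1-based basis vector of R^m, stored 0-based) or the zero vector.\<close>
definition Evec :: "nat \<Rightarrow> nat set set \<Rightarrow> nat \<Rightarrow> nat \<Rightarrow> real vec" where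
  "Evec N E i j = (if j \<in> cnbrs N E i then unit_vec (mtot N E) (sidx N E i j - 1)
                   else 0\<^sub>v (mtot N E))"

definition Hmat :: "nat \<Rightarrow> nat set set \<Rightarrow> real mat" where
  "Hmat N E = mat (mtot N E) N (\<lambda>(r, c). \<Sum>i = 1..N. Evec N E i (c + 1) $ r)"

definition Hbar :: "nat \<Rightarrow> nat set set \<Rightarrow> real mat" where
  "Hbar N E = mat N (mtot N E) (\<lambda>(r, c). (1 / real (mdeg N E (r + 1))) * Hmat N E $$ (c, r))"

definition ind :: "nat \<Rightarrow> nat set set \<Rightarrow> nat \<Rightarrow> nat \<Rightarrow> nat set" where
  "ind N E i j = cnbrs N E i \<inter> cnbrs N E j"

definition Wmat :: "nat \<Rightarrow> nat set set \<Rightarrow> nat \<Rightarrow> nat \<Rightarrow> real mat" where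
  "Wmat N E i j = 1\<^sub>m (mtot N E) - (1 / 2) \<cdot>\<^sub>m
     mat (mtot N E) (mtot N E) (\<lambda>(r, c). \<Sum>l \<in> ind N E i j.
        (Evec N E i l - Evec N E j l) $ r * (Evec N E i l - Evec N E j l) $ c)"

text \<open>Expectation of a matrix-valued function F(i_k, j_k) of the random pair, where i_k is
  uniform on V and j_k is uniform on N_C(i_k). The matrices are n x n.\<close>
definition expect :: "nat \<Rightarrow> nat set set \<Rightarrow> nat \<Rightarrow> (nat \<Rightarrow> nat \<Rightarrow> real mat) \<Rightarrow> real mat" where
  "expect N EC n F = mat n n (\<lambda>(r, c).
     \<Sum>i = 1..N. \<Sum>j \<in> nbrs N EC i. (1 / real N) * (1 / real (card (nbrs N EC i))) * F i j $$ (r, c))"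

definition Qmat :: "nat \<Rightarrow> nat set set \<Rightarrow> nat \<Rightarrow> nat \<Rightarrow> real mat" where
  "Qmat N E i j = Wmat N E i j - Hmat N E * Hbar N E * Wmat N E i j"

definition doubly_stochastic :: "real mat \<Rightarrow> bool" where
  "doubly_stochastic A \<longleftrightarrow> dim_row A = dim_col A \<and>
     (\<forall>r < dim_row A. \<forall>c < dim_col A. A $$ (r, c) \<ge> 0) \<and>
     (\<forall>r < dim_row A. (\<Sum>c < dim_col A. A $$ (r, c)) = 1) \<and>
     (\<forall>c < dim_col A. (\<Sum>r < dim_row A. A $$ (r, c)) = 1)"

definition lambda_max :: "real mat \<Rightarrow> real" where
  "lambda_max A = Max {k. eigenvalue A k}"

definition lambda_2 :: "real mat \<Rightarrow> real" where
  "lambda_2 A = Max {k. eigenvalue A k \<and> k \<noteq> 1}"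

end

theory Submission
  imports Defs "Jordan_Normal_Form.Schur_Decomposition"
begin


locale lsetup =
  fixes N :: nat and EI EC Em :: "nat set set"
  assumes N2: "N \<ge> 2"
    and sg: "simple_graph N EI"
    and conn: "graph_connected N EI"
    and ncomp: "\<not> graph_complete N EI"
    and mtf: "max_triangle_free_spanning EI Em"
    and EmC: "Em \<subseteq> EC" and ECI: "EC \<subseteq> EI"
begin

abbreviation "cn \<equiv> cnbrs N EI"
abbreviation "nb \<equiv> nbrs N EI"
abbreviation "nbC \<equiv> nbrs N EC"
abbreviation "m \<equiv> mtot N EI"
abbreviation "md \<equiv> mdeg N EI"

lemma edge_ne: assumes "{i,j} \<in> EI" shows "i \<noteq> j \<and> i \<in> {1..N} \<and> j \<in> {1..N}"
proof -
  obtain a b where "a \<in> {1..N}" "b \<in> {1..N}" "a \<noteq> b" "{i,j} = {a,b}"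
    using sg assms unfolding simple_graph_def by blast
  then show ?thesis by (auto simp: doubleton_eq_iff)
qed

lemma nb_sub: "nb i \<subseteq> {1..N}" unfolding nbrs_def by auto
lemma fin_nb[simp]: "finite (nb i)" using nb_sub finite_subset by blast
lemma fin_cn[simp]: "finite (cn i)" unfolding cnbrs_def by simp
lemma notin_nb: "i \<notin> nb i" unfolding nbrs_def using edge_ne[of i i] by auto
lemma card_cn: "card (cn i) = md i"
  unfolding cnbrs_def mdeg_def using notin_nb by simp
lemma nb_sym: "j \<in> nb i \<longleftrightarrow> i \<in> nb j"
  unfolding nbrs_def using edge_ne by (auto simp: insert_commute)
lemma cn_sym: "j \<in> cn i \<longleftrightarrow> i \<in> cn j"
  unfolding cnbrs_def using nb_sym by auto
lemma cn_sub: "i \<in> {1..N} \<Longrightarrow> cn i \<subseteq> {1..N}"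
  unfolding cnbrs_def using nb_sub by auto
lemma self_cn: "i \<in> cn i" unfolding cnbrs_def by auto

definition off :: "nat \<Rightarrow> nat" where "off i = (\<Sum>r = 1..<i. md r)"
definition cl :: "nat \<Rightarrow> nat \<Rightarrow> nat" where "cl i l = card ({1..l} \<inter> cn i)"
definition pos :: "nat \<Rightarrow> nat \<Rightarrow> nat" where "pos i l = sidx N EI i l - 1"

lemma sidx_eq: "sidx N EI i l = cl i l + off i"
proof -
  have "(\<Sum>l' = 1..l. Bent N EI i l') = (\<Sum>l'\<in>{1..l}. if l' \<in> cn i then 1 else 0)"
    unfolding Bent_def by simp
  also have "\<dots> = card {l' \<in> {1..l}. l' \<in> cn i}"
    by (subst sum.inter_filter[symmetric]) auto
  also have "{l' \<in> {1..l}. l' \<in> cn i} = {1..l} \<inter> cn i" by auto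
  finally show ?thesis unfolding sidx_def cl_def off_def by simp
qed

lemma cl_bounds: assumes "i \<in> {1..N}" "l \<in> cn i" shows "1 \<le> cl i l" "cl i l \<le> md i"
proof -
  have "l \<in> {1..N}" using cn_sub[OF assms(1)] assms(2) by blast
  then have "l \<in> {1..l} \<inter> cn i" using assms by auto
  then show "1 \<le> cl i l" unfolding cl_def
    by (metis One_nat_def Suc_leI card_gt_0_iff empty_iff finite_Int finite_atLeastAtMost)
  show "cl i l \<le> md i" unfolding cl_def card_cn[symmetric] by (rule card_mono) auto
qed

lemma pos_eq: assumes "i \<in> {1..N}" "l \<in> cn i" shows "pos i l = cl i l - 1 + off i"
  using cl_bounds[OF assms] unfolding pos_def sidx_eq by simp

lemma off_Suc: "i \<ge> 1 \<Longrightarrow> off (Suc i) = off i + md i"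
  unfolding off_def by simp

lemma off_mono: "i \<le> i' \<Longrightarrow> off i \<le> off i'"
  unfolding off_def by (rule sum_mono2) auto

lemma m_eq: "m = off (Suc N)"
  unfolding mtot_def off_def by (simp add: atLeastLessThanSuc_atLeastAtMost)

lemma pos_lt: assumes "i \<in> {1..N}" "l \<in> cn i" shows "pos i l < off (Suc i)"
  using pos_eq[OF assms] cl_bounds[OF assms] off_Suc[of i] assms by auto

lemma pos_ge: assumes "i \<in> {1..N}" "l \<in> cn i" shows "off i \<le> pos i l"
  using pos_eq[OF assms] by auto

lemma pos_lt_m: assumes "i \<in> {1..N}" "l \<in> cn i" shows "pos i l < m"
proof -
  have "off (Suc i) \<le> off (Suc N)" using assms by (intro off_mono) auto
  then show ?thesis using pos_lt[OF assms] m_eq by simp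
qed

definition T :: "(nat \<times> nat) set" where "T = Sigma {1..N} cn"

abbreviation pp :: "nat \<times> nat \<Rightarrow> nat" where "pp \<equiv> (\<lambda>(i,l). pos i l)"

lemma cl_strict: assumes "i \<in> {1..N}" "l \<in> cn i" "l' \<in> cn i" "l < l'" shows "cl i l < cl i l'"
proof -
  have "{1..l} \<inter> cn i \<subset> {1..l'} \<inter> cn i"
  proof
    show "{1..l} \<inter> cn i \<subseteq> {1..l'} \<inter> cn i" using assms by auto
    have "l' \<in> {1..N}" using cn_sub[OF assms(1)] assms(3) by blast
    then have "l' \<in> {1..l'} \<inter> cn i" "l' \<notin> {1..l} \<inter> cn i" using assms by auto
    then show "{1..l} \<inter> cn i \<noteq> {1..l'} \<inter> cn i" by blast
  qed
  then show ?thesis unfolding cl_def by (intro psubset_card_mono) auto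
qed

lemma pos_inj_aux: assumes "i \<in> {1..N}" "l \<in> cn i" "i' \<in> {1..N}" "l' \<in> cn i'" "i < i'"
  shows "pos i l < pos i' l'"
proof -
  have "off (Suc i) \<le> off i'" using assms by (intro off_mono) auto
  then show ?thesis using pos_lt[OF assms(1,2)] pos_ge[OF assms(3,4)] by simp
qed

lemma inj_pp: "inj_on pp T"
proof (rule inj_onI)
  fix x y assume x: "x \<in> T" and y: "y \<in> T" and e: "pp x = pp y"
  obtain i l where xi: "x = (i,l)" by force
  obtain i' l' where yi: "y = (i',l')" by force
  have a: "i \<in> {1..N}" "l \<in> cn i" "i' \<in> {1..N}" "l' \<in> cn i'" using x y xi yi T_def by auto
  have e': "pos i l = pos i' l'" using e xi yi by simp
  have ii: "i = i'"
    using pos_inj_aux[OF a] pos_inj_aux[OF a(3,4,1,2)] e' by (metis nat_neq_iff)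
  have "l = l'"
  proof (rule ccontr)
    assume "l \<noteq> l'"
    then consider "l < l'" | "l' < l" by linarith
    then show False
    proof cases
      case 1
      have "cl i l < cl i l'" using cl_strict[OF a(1,2)] a ii 1 by auto
      then show False using e' pos_eq[OF a(1,2)] pos_eq[OF a(3,4)] ii cl_bounds[OF a(1,2)] cl_bounds[OF a(3,4)] by auto
    next
      case 2
      have "cl i l' < cl i l" using cl_strict[OF a(1)] a ii 2 by auto
      then show False using e' pos_eq[OF a(1,2)] pos_eq[OF a(3,4)] ii cl_bounds[OF a(1,2)] cl_bounds[OF a(3,4)] by auto
    qed
  qed
  then show "x = y" using xi yi ii by simp
qed

lemma card_T: "card T = m"
proof -
  have "card T = (\<Sum>i\<in>{1..N}. card (cn i))" unfolding T_def by (rule card_SigmaI) auto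
  then show ?thesis unfolding mtot_def card_cn by simp
qed

lemma fin_T: "finite T" unfolding T_def by auto

lemma bij_pp: "bij_betw pp T {0..<m}"
proof -
  have sub: "pp ` T \<subseteq> {0..<m}" using pos_lt_m unfolding T_def by auto
  have "card (pp ` T) = m" using card_image[OF inj_pp] card_T by simp
  then have "pp ` T = {0..<m}" using sub by (intro card_subset_eq) auto
  then show ?thesis using inj_pp unfolding bij_betw_def by simp
qed

definition ownvar :: "nat \<Rightarrow> nat \<times> nat" where "ownvar r = the_inv_into T pp r"
definition own :: "nat \<Rightarrow> nat" where "own r = fst (ownvar r)"
definition var :: "nat \<Rightarrow> nat" where "var r = snd (ownvar r)"

lemma ownvar_T: "r < m \<Longrightarrow> ownvar r \<in> T"
  unfolding ownvar_def using bij_pp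
  by (metis atLeastLessThan_iff bij_betw_def the_inv_into_into zero_le order_refl)

lemma pp_ownvar: "r < m \<Longrightarrow> pp (ownvar r) = r"
  unfolding ownvar_def using bij_pp
  by (metis atLeastLessThan_iff bij_betw_def f_the_inv_into_f zero_le)

lemma own_range: "r < m \<Longrightarrow> own r \<in> {1..N}"
  using ownvar_T[of r] unfolding own_def T_def by (cases "ownvar r") auto
lemma var_cn: "r < m \<Longrightarrow> var r \<in> cn (own r)"
  using ownvar_T[of r] unfolding own_def var_def T_def by (cases "ownvar r") auto
lemma var_range: "r < m \<Longrightarrow> var r \<in> {1..N}"
  using var_cn own_range cn_sub by blast
lemma pos_own_var: "r < m \<Longrightarrow> pos (own r) (var r) = r"
  using pp_ownvar unfolding own_def var_def by (metis case_prod_beta)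

lemma ownvar_pos: assumes "i \<in> {1..N}" "l \<in> cn i" shows "own (pos i l) = i" "var (pos i l) = l"
proof -
  have "(i,l) \<in> T" using assms T_def by auto
  then have "ownvar (pos i l) = (i,l)" unfolding ownvar_def
    using the_inv_into_f_f[OF inj_pp, of "(i,l)"] by simp
  then show "own (pos i l) = i" "var (pos i l) = l" unfolding own_def var_def by auto
qed

lemma pos_iff: assumes "r < m" "i \<in> {1..N}" "l \<in> cn i"
  shows "r = pos i l \<longleftrightarrow> own r = i \<and> var r = l"
  using ownvar_pos[OF assms(2,3)] pos_own_var[OF assms(1)] by auto

lemma cnt_var: assumes "l \<in> {1..N}" shows "card {k\<in>{0..<m}. var k = l} = md l"
proof -
  have "{k\<in>{0..<m}. var k = l} = (\<lambda>i. pos i l) ` cn l"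
  proof
    show "{k\<in>{0..<m}. var k = l} \<subseteq> (\<lambda>i. pos i l) ` cn l"
    proof
      fix k assume "k \<in> {k\<in>{0..<m}. var k = l}"
      then have k: "k < m" "var k = l" by auto
      then have "own k \<in> cn l" using var_cn cn_sym by blast
      moreover have "k = pos (own k) l" by (metis pos_own_var k)
      ultimately show "k \<in> (\<lambda>i. pos i l) ` cn l" by blast
    qed
    show "(\<lambda>i. pos i l) ` cn l \<subseteq> {k\<in>{0..<m}. var k = l}"
    proof
      fix k assume "k \<in> (\<lambda>i. pos i l) ` cn l"
      then obtain i where i: "i \<in> cn l" "k = pos i l" by auto
      have i1: "i \<in> {1..N}" using cn_sub[OF assms] i(1) by blast
      have l: "l \<in> cn i" using i cn_sym by auto
      show "k \<in> {k\<in>{0..<m}. var k = l}" using pos_lt_m[OF i1 l] ownvar_pos[OF i1 l] i by auto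
    qed
  qed
  moreover have "inj_on (\<lambda>i. pos i l) (cn l)"
  proof (rule inj_onI)
    fix i i' assume "i \<in> cn l" "i' \<in> cn l" "pos i l = pos i' l"
    then show "i = i'" using ownvar_pos cn_sub[OF assms] cn_sym by (metis subsetD)
  qed
  ultimately show ?thesis using card_image card_cn by metis
qed

end

context lsetup begin

lemma dim_Evec[simp]: "dim_vec (Evec N EI i l) = m"
  unfolding Evec_def by simp

lemma Evec_idx: assumes "i \<in> {1..N}" "r < m"
  shows "Evec N EI i l $ r = of_bool (own r = i \<and> var r = l)"
proof (cases "l \<in> cn i")
  case True
  have "sidx N EI i l - 1 = pos i l" unfolding pos_def by simp
  then have "Evec N EI i l = unit_vec m (pos i l)" unfolding Evec_def using True by simp
  then show ?thesis using pos_lt_m[OF assms(1) True] assms(2) pos_iff[OF assms(2,1) True]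
    by (simp add: index_unit_vec)
next
  case False
  then have "Evec N EI i l = 0\<^sub>v m" unfolding Evec_def by simp
  moreover have "\<not> (own r = i \<and> var r = l)" using False var_cn[OF assms(2)] by auto
  ultimately show ?thesis using assms(2) by simp
qed

lemma H_idx: assumes "r < m" "c < N" shows "Hmat N EI $$ (r,c) = of_bool (var r = c + 1)"
proof -
  have "Hmat N EI $$ (r,c) = (\<Sum>i = 1..N. Evec N EI i (c + 1) $ r)"
    unfolding Hmat_def using assms by simp
  also have "\<dots> = (\<Sum>i\<in>{1..N}. if i = own r then of_bool (var r = c + 1) else 0)"
    by (rule sum.cong, simp, subst Evec_idx, use assms in auto)
  also have "\<dots> = of_bool (var r = c + 1)" using own_range[OF assms(1)] by simp
  finally show ?thesis .
qed

lemma Hbar_idx: assumes "r < N" "c < m"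
  shows "Hbar N EI $$ (r,c) = of_bool (var c = r + 1) / real (md (r + 1))"
proof -
  have "Hbar N EI $$ (r,c) = 1 / real (md (r+1)) * Hmat N EI $$ (c,r)" unfolding Hbar_def using assms by simp
  also have "\<dots> = of_bool (var c = r + 1) / real (md (r + 1))" using H_idx[of c r] assms by simp
  finally show ?thesis .
qed

lemma dim_H[simp]: "dim_row (Hmat N EI) = m" "dim_col (Hmat N EI) = N"
  unfolding Hmat_def by auto
lemma dim_Hbar[simp]: "dim_row (Hbar N EI) = N" "dim_col (Hbar N EI) = m"
  unfolding Hbar_def by auto

definition Pm :: "real mat" where
  "Pm = mat m m (\<lambda>(r,c). if var r = var c then 1 / real (md (var r)) else 0)"

lemma Pm_carrier[simp]: "Pm \<in> carrier_mat m m" unfolding Pm_def by simp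
lemma Pm_idx: "r < m \<Longrightarrow> c < m \<Longrightarrow> Pm $$ (r,c) = (if var r = var c then 1 / real (md (var r)) else 0)"
  unfolding Pm_def by simp
lemma Pm_sym: "r < m \<Longrightarrow> c < m \<Longrightarrow> Pm $$ (r,c) = Pm $$ (c,r)"
  unfolding Pm_idx by auto

lemma HH: "Hmat N EI * Hbar N EI = Pm"
proof (rule eq_matI)
  fix r c assume rc: "r < dim_row Pm" "c < dim_col Pm"
  then have r: "r < m" and c: "c < m" unfolding Pm_def by auto
  have v: "var r \<in> {1..N}" using var_range[OF r] .
  have "(Hmat N EI * Hbar N EI) $$ (r,c) = (\<Sum>k\<in>{0..<N}. Hmat N EI $$ (r,k) * Hbar N EI $$ (k,c))"
    using r c by (simp add: scalar_prod_def)
  also have "\<dots> = (\<Sum>k\<in>{0..<N}. if k = var r - 1 then of_bool (var c = var r) / real (md (var r)) else 0)"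
    by (rule sum.cong, simp, use r c v in \<open>auto simp: H_idx Hbar_idx\<close>)
  also have "\<dots> = Pm $$ (r,c)" using v r c by (auto simp: Pm_idx)
  finally show "(Hmat N EI * Hbar N EI) $$ (r,c) = Pm $$ (r,c)" .
qed (auto simp: Pm_def)

definition piv :: "nat \<Rightarrow> nat \<Rightarrow> nat \<Rightarrow> nat" where
  "piv i j r = (if own r = i \<and> var r \<in> ind N EI i j then pos j (var r)
     else if own r = j \<and> var r \<in> ind N EI i j then pos i (var r) else r)"

definition goodpair :: "nat \<Rightarrow> nat \<Rightarrow> bool" where
  "goodpair i j \<longleftrightarrow> i \<in> {1..N} \<and> j \<in> {1..N} \<and> i \<noteq> j"

lemma ind_cn: "l \<in> ind N EI i j \<Longrightarrow> l \<in> cn i \<and> l \<in> cn j"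
  unfolding ind_def by auto

lemma piv_props: assumes g: "goodpair i j" and r: "r < m"
  shows "piv i j r < m" "var (piv i j r) = var r" "piv i j (piv i j r) = r"
proof -
  have gi: "i \<in> {1..N}" "j \<in> {1..N}" "i \<noteq> j" using g goodpair_def by auto
  consider (a) "own r = i" "var r \<in> ind N EI i j" | (b) "own r = j" "var r \<in> ind N EI i j"
    | (c) "\<not> (own r = i \<and> var r \<in> ind N EI i j)" "\<not> (own r = j \<and> var r \<in> ind N EI i j)" by blast
  then have "piv i j r < m \<and> var (piv i j r) = var r \<and> piv i j (piv i j r) = r"
  proof cases
    case a
    have l: "var r \<in> cn i" "var r \<in> cn j" using ind_cn a by auto
    have p: "piv i j r = pos j (var r)" using a unfolding piv_def by simp
    have o: "own (pos j (var r)) = j" "var (pos j (var r)) = var r" using ownvar_pos gi l by auto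
    have "piv i j (pos j (var r)) = pos i (var r)" using o gi a unfolding piv_def by auto
    also have "\<dots> = r" using a pos_own_var r by auto
    finally show ?thesis using p o pos_lt_m gi l by auto
  next
    case b
    have l: "var r \<in> cn i" "var r \<in> cn j" using ind_cn b by auto
    have p: "piv i j r = pos i (var r)" using b gi unfolding piv_def by simp
    have o: "own (pos i (var r)) = i" "var (pos i (var r)) = var r" using ownvar_pos gi l by auto
    have "piv i j (pos i (var r)) = pos j (var r)" using o gi b unfolding piv_def by auto
    also have "\<dots> = r" using b pos_own_var r by auto
    finally show ?thesis using p o pos_lt_m gi l by auto
  next
    case c
    then have "piv i j r = r" unfolding piv_def by auto
    then show ?thesis using r by simp
  qed
  then show "piv i j r < m" "var (piv i j r) = var r" "piv i j (piv i j r) = r" by auto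
qed

lemma dim_Wmat[simp]: "Wmat N EI i j \<in> carrier_mat m m" unfolding Wmat_def carrier_mat_def by simp

lemma W_idx: assumes g: "goodpair i j" and r: "r < m" and c: "c < m"
  shows "Wmat N EI i j $$ (r,c) = (of_bool (c = r) + of_bool (c = piv i j r)) / 2"
proof -
  have gi: "i \<in> {1..N}" "j \<in> {1..N}" "i \<noteq> j" using g goodpair_def by auto
  define I where "I = ind N EI i j"
  define sg where "sg = (\<lambda>x. of_bool (own x = i) - of_bool (own x = j) :: real)"
  have ev: "\<And>x l. x < m \<Longrightarrow> (Evec N EI i l - Evec N EI j l) $ x = sg x * of_bool (var x = l)"
    using gi unfolding sg_def by (auto simp: Evec_idx)
  have S: "(\<Sum>l\<in>I. (Evec N EI i l - Evec N EI j l) $ r * (Evec N EI i l - Evec N EI j l) $ c)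
     = (if var r \<in> I \<and> var c = var r then sg r * sg c else 0)"
  proof -
    have "(\<Sum>l\<in>I. (Evec N EI i l - Evec N EI j l) $ r * (Evec N EI i l - Evec N EI j l) $ c)
      = (\<Sum>l\<in>I. if l = var r then (if var c = var r then sg r * sg c else 0) else 0)"
      by (rule sum.cong, simp, use r c in \<open>simp only: ev\<close>, auto)
    also have "\<dots> = (if var r \<in> I \<and> var c = var r then sg r * sg c else 0)"
      unfolding I_def ind_def by (simp add: sum.delta')
    finally show ?thesis .
  qed
  have W: "Wmat N EI i j $$ (r,c) = of_bool (r = c) - 1/2 * (if var r \<in> I \<and> var c = var r then sg r * sg c else 0)"
    unfolding Wmat_def using r c S[unfolded I_def] by (simp add: I_def)
  have cpos: "c = pos (own c) (var c)" using pos_own_var c by simp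
  have rpos: "r = pos (own r) (var r)" using pos_own_var r by simp
  consider (a) "own r = i" "var r \<in> I" | (b) "own r = j" "var r \<in> I"
    | (o) "\<not> (own r = i \<and> var r \<in> I)" "\<not> (own r = j \<and> var r \<in> I)" by blast
  then show ?thesis
  proof cases
    case a
    have l: "var r \<in> cn j" using ind_cn a I_def by auto
    have p: "piv i j r = pos j (var r)" using a unfolding piv_def I_def by simp
    have o: "own (pos j (var r)) = j" "var (pos j (var r)) = var r" using ownvar_pos gi l by auto
    have sr: "sg r = 1" using a gi sg_def by auto
    show ?thesis
    proof (cases "c = r")
      case True
      then have "c \<noteq> piv i j r" using p o a gi by auto
      then show ?thesis using W True sr a by simp
    next
      case False
      show ?thesis
      proof (cases "c = piv i j r")
        case True
        then have "sg c = -1" "var c = var r" using o p gi sg_def by auto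
        then show ?thesis using W True False sr a by simp
      next
        case F2: False
        have "\<not> (var c = var r \<and> (own c = i \<or> own c = j))"
          using cpos rpos p a F2 False by metis
        then have "var c = var r \<longrightarrow> sg c = 0" using sg_def by auto
        then show ?thesis using W False F2 by auto
      qed
    qed
  next
    case b
    have l: "var r \<in> cn i" using ind_cn b I_def by auto
    have p: "piv i j r = pos i (var r)" using b gi unfolding piv_def I_def by simp
    have o: "own (pos i (var r)) = i" "var (pos i (var r)) = var r" using ownvar_pos gi l by auto
    have sr: "sg r = -1" using b gi sg_def by auto
    show ?thesis
    proof (cases "c = r")
      case True
      then have "c \<noteq> piv i j r" using p o b gi by auto
      then show ?thesis using W True sr b by simp
    next
      case False
      show ?thesis
      proof (cases "c = piv i j r")
        case True
        then have "sg c = 1" "var c = var r" using o p gi sg_def by auto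
        then show ?thesis using W True False sr b by simp
      next
        case F2: False
        have "\<not> (var c = var r \<and> (own c = i \<or> own c = j))"
          using cpos rpos p b F2 False by metis
        then have "var c = var r \<longrightarrow> sg c = 0" using sg_def by auto
        then show ?thesis using W False F2 by auto
      qed
    qed
  next
    case o
    then have p: "piv i j r = r" unfolding piv_def I_def by auto
    have "var r \<in> I \<longrightarrow> sg r = 0" using o sg_def by auto
    then show ?thesis using W p by auto
  qed
qed

end

context lsetup begin

definition Wf :: "(nat \<Rightarrow> nat) \<Rightarrow> real mat" where
  "Wf f = mat m m (\<lambda>(r,c). (of_bool (c = r) + of_bool (c = f r)) / 2)"
definition invo :: "(nat \<Rightarrow> nat) \<Rightarrow> bool" where
  "invo f \<longleftrightarrow> (\<forall>r<m. f r < m \<and> f (f r) = r \<and> var (f r) = var r)"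

lemma Wf_carrier[simp]: "Wf f \<in> carrier_mat m m" unfolding Wf_def by simp
lemma Wf_dim[simp]: "dim_row (Wf f) = m" "dim_col (Wf f) = m" unfolding Wf_def by simp_all
lemma Pm_dim[simp]: "dim_row Pm = m" "dim_col Pm = m" unfolding Pm_def by simp_all
lemma Wf_idx: "r < m \<Longrightarrow> c < m \<Longrightarrow> Wf f $$ (r,c) = (of_bool (c = r) + of_bool (c = f r)) / 2"
  unfolding Wf_def by simp

lemma invo_piv: "goodpair i j \<Longrightarrow> invo (piv i j)"
  unfolding invo_def using piv_props by blast

lemma W_Wf: assumes g: "goodpair i j" shows "Wmat N EI i j = Wf (piv i j)"
proof (rule eq_matI)
  fix r c assume "r < dim_row (Wf (piv i j))" "c < dim_col (Wf (piv i j))"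
  then show "Wmat N EI i j $$ (r,c) = Wf (piv i j) $$ (r,c)" using W_idx[OF g] by (simp add: Wf_def)
qed (auto simp: Wf_def Wmat_def)

lemma sumG: fixes g :: "nat \<Rightarrow> real" assumes "a < m" "b < m"
  shows "(\<Sum>k\<in>{0..<m}. (of_bool (k = a) + of_bool (k = b)) * g k) = g a + g b"
proof -
  have "(\<Sum>k\<in>{0..<m}. (of_bool (k = a) + of_bool (k = b)) * g k)
    = (\<Sum>k\<in>{0..<m}. of_bool (k = a) * g k) + (\<Sum>k\<in>{0..<m}. of_bool (k = b) * g k)"
    by (simp only: distrib_right sum.distrib)
  also have "\<dots> = sum g ({0..<m} \<inter> {k. k = a}) + sum g ({0..<m} \<inter> {k. k = b})"
    by (simp only: sum_of_bool_mult_eq finite_atLeastLessThan)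
  also have "{0..<m} \<inter> {k. k = a} = {a}" using assms by auto
  also have "{0..<m} \<inter> {k. k = b} = {b}" using assms by auto
  finally show ?thesis by simp
qed

lemma mult_idx: assumes "A \<in> carrier_mat m m" "B \<in> carrier_mat m m" "r < m" "c < m"
  shows "(A * B) $$ (r,c) = (\<Sum>k\<in>{0..<m}. A $$ (r,k) * B $$ (k,c))"
  using assms by (simp add: scalar_prod_def)

lemma invo_D: "invo f \<Longrightarrow> r < m \<Longrightarrow> f r < m \<and> f (f r) = r \<and> var (f r) = var r"
  unfolding invo_def by blast

lemma invo_eq: "invo f \<Longrightarrow> r < m \<Longrightarrow> c < m \<Longrightarrow> (c = f r) = (r = f c)"
  using invo_D by metis

lemma Wf_sym: assumes "invo f" "r < m" "c < m" shows "Wf f $$ (r,c) = Wf f $$ (c,r)"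
  using assms invo_eq[OF assms] by (auto simp: Wf_idx)

lemma Wf_alt: assumes "invo f" "r < m" "c < m"
  shows "Wf f $$ (r,c) = (of_bool (r = c) + of_bool (r = f c)) / 2"
  using Wf_sym[OF assms] assms by (simp add: Wf_idx)

lemma WW: assumes f: "invo f" shows "Wf f * Wf f = Wf f"
proof (rule eq_matI)
  fix r c assume "r < dim_row (Wf f)" "c < dim_col (Wf f)"
  then have r: "r < m" and c: "c < m" by (auto simp: Wf_def)
  have fr: "f r < m" "f (f r) = r" using invo_D[OF f r] by auto
  define g where "g = (\<lambda>k. Wf f $$ (k,c) / 2)"
  have "(Wf f * Wf f) $$ (r,c) = (\<Sum>k\<in>{0..<m}. (of_bool (k = r) + of_bool (k = f r)) * g k)"
    using r c unfolding g_def by (subst mult_idx) (auto intro!: sum.cong simp: Wf_idx eq_commute[of _ r] eq_commute[of _ "f r"])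
  also have "\<dots> = g r + g (f r)" by (rule sumG[OF r fr(1)])
  also have "\<dots> = Wf f $$ (r,c) / 2 + Wf f $$ (f r, c) / 2" unfolding g_def by simp
  also have "\<dots> = Wf f $$ (r,c)" using r c fr by (auto simp: Wf_idx)
  finally show "(Wf f * Wf f) $$ (r,c) = Wf f $$ (r,c)" .
qed (auto simp: Wf_def)

lemma WP: assumes f: "invo f" shows "Wf f * Pm = Pm"
proof (rule eq_matI)
  fix r c assume "r < dim_row Pm" "c < dim_col Pm"
  then have r: "r < m" and c: "c < m" by (auto simp: Pm_def)
  have fr: "f r < m" "var (f r) = var r" using invo_D[OF f r] by auto
  define g where "g = (\<lambda>k. Pm $$ (k,c) / 2)"
  have "(Wf f * Pm) $$ (r,c) = (\<Sum>k\<in>{0..<m}. (of_bool (k = r) + of_bool (k = f r)) * g k)"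
    using r c unfolding g_def by (subst mult_idx) (auto intro!: sum.cong simp: Wf_idx eq_commute[of _ r] eq_commute[of _ "f r"])
  also have "\<dots> = g r + g (f r)" by (rule sumG[OF r fr(1)])
  also have "\<dots> = Pm $$ (r,c) / 2 + Pm $$ (f r, c) / 2" unfolding g_def by simp
  also have "\<dots> = Pm $$ (r,c)" using r c fr by (auto simp: Pm_idx)
  finally show "(Wf f * Pm) $$ (r,c) = Pm $$ (r,c)" .
qed (auto simp: Wf_def Pm_def)

lemma PW: assumes f: "invo f" shows "Pm * Wf f = Pm"
proof (rule eq_matI)
  fix r c assume "r < dim_row Pm" "c < dim_col Pm"
  then have r: "r < m" and c: "c < m" by (auto simp: Pm_def)
  have fc: "f c < m" "var (f c) = var c" using invo_D[OF f c] by auto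
  define g where "g = (\<lambda>k. Pm $$ (r,k) / 2)"
  have "(Pm * Wf f) $$ (r,c) = (\<Sum>k\<in>{0..<m}. (of_bool (k = c) + of_bool (k = f c)) * g k)"
    using r c unfolding g_def by (subst mult_idx) (auto intro!: sum.cong simp: Wf_alt[OF f] mult.commute)
  also have "\<dots> = g c + g (f c)" by (rule sumG[OF c fc(1)])
  also have "\<dots> = Pm $$ (r,c) / 2 + Pm $$ (r, f c) / 2" unfolding g_def by simp
  also have "\<dots> = Pm $$ (r,c)" using r c fc by (auto simp: Pm_idx)
  finally show "(Pm * Wf f) $$ (r,c) = Pm $$ (r,c)" .
qed (auto simp: Wf_def Pm_def)

lemma PP: "Pm * Pm = Pm"
proof (rule eq_matI)
  fix r c assume "r < dim_row Pm" "c < dim_col Pm"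
  then have r: "r < m" and c: "c < m" by (auto simp: Pm_def)
  have v: "var r \<in> {1..N}" using var_range r by auto
  have mdp: "real (md (var r)) > 0" unfolding mdeg_def by simp
  have "(Pm * Pm) $$ (r,c) = (\<Sum>k\<in>{0..<m}. if var k = var r then
      (if var r = var c then 1 / real (md (var r)) ^ 2 else 0) else 0)"
    using r c by (subst mult_idx) (auto intro!: sum.cong simp: Pm_idx power2_eq_square)
  also have "\<dots> = (\<Sum>k\<in>{k\<in>{0..<m}. var k = var r}. (if var r = var c then 1 / real (md (var r)) ^ 2 else 0))"
    by (subst sum.inter_filter) auto
  also have "\<dots> = real (md (var r)) * (if var r = var c then 1 / real (md (var r)) ^ 2 else 0)"
    using cnt_var[OF v] by simp
  also have "\<dots> = Pm $$ (r,c)" using r c mdp by (auto simp: Pm_idx power2_eq_square)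
  finally show "(Pm * Pm) $$ (r,c) = Pm $$ (r,c)" .
qed (auto simp: Pm_def)

lemma Q_eq: assumes g: "goodpair i j" shows "Qmat N EI i j = Wf (piv i j) - Pm"
  unfolding Qmat_def HH W_Wf[OF g] PW[OF invo_piv[OF g]] ..

lemma QQ: assumes g: "goodpair i j"
  shows "(Qmat N EI i j)\<^sup>T * Qmat N EI i j = Wf (piv i j) - Pm"
proof -
  let ?W = "Wf (piv i j)"
  have f: "invo (piv i j)" using invo_piv[OF g] .
  have tr: "(?W - Pm)\<^sup>T = ?W - Pm"
  proof (rule eq_matI)
    fix r c assume "r < dim_row (?W - Pm)" "c < dim_col (?W - Pm)"
    then have r: "r < m" and c: "c < m" by auto
    have "(?W - Pm)\<^sup>T $$ (r,c) = ?W $$ (c,r) - Pm $$ (c,r)" using r c by simp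
    also have "\<dots> = ?W $$ (r,c) - Pm $$ (r,c)" using Wf_sym[OF f r c] Pm_sym[OF r c] by simp
    also have "\<dots> = (?W - Pm) $$ (r,c)" using r c by simp
    finally show "(?W - Pm)\<^sup>T $$ (r,c) = (?W - Pm) $$ (r,c)" .
  qed auto
  have c1: "?W - Pm \<in> carrier_mat m m" using Pm_carrier by (rule minus_carrier_mat)
  have e1: "(?W - Pm) * (?W - Pm) = (?W - Pm) * ?W - (?W - Pm) * Pm"
    by (rule mult_minus_distrib_mat[OF c1 Wf_carrier Pm_carrier])
  have e2: "(?W - Pm) * ?W = ?W * ?W - Pm * ?W"
    by (rule minus_mult_distrib_mat[OF Wf_carrier Pm_carrier Wf_carrier])
  have e3: "(?W - Pm) * Pm = ?W * Pm - Pm * Pm"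
    by (rule minus_mult_distrib_mat[OF Wf_carrier Pm_carrier Pm_carrier])
  have e4: "(?W - Pm) - (Pm - Pm) = ?W - Pm"
  proof (rule eq_matI)
    fix r c assume "r < dim_row (?W - Pm)" "c < dim_col (?W - Pm)"
    then show "((?W - Pm) - (Pm - Pm)) $$ (r,c) = (?W - Pm) $$ (r,c)" by simp
  qed auto
  have "(?W - Pm) * (?W - Pm) = ?W - Pm"
    unfolding e1 e2 e3 WW[OF f] PW[OF f] WP[OF f] PP e4 ..
  then show ?thesis unfolding Q_eq[OF g] tr .
qed

lemma Wvec: assumes f: "invo f" and x: "x \<in> carrier_vec m" and r: "r < m"
  shows "(Wf f *\<^sub>v x) $ r = (x $ r + x $ (f r)) / 2"
proof -
  have fr: "f r < m" using invo_D[OF f r] by auto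
  define g where "g = (\<lambda>k. x $ k / 2)"
  have "(Wf f *\<^sub>v x) $ r = (\<Sum>k\<in>{0..<m}. Wf f $$ (r,k) * x $ k)"
    using r x by (simp add: scalar_prod_def)
  also have "\<dots> = (\<Sum>k\<in>{0..<m}. (of_bool (k = r) + of_bool (k = f r)) * g k)"
    unfolding g_def by (rule sum.cong[OF refl]) (use r in \<open>simp add: Wf_idx\<close>)
  also have "\<dots> = g r + g (f r)" by (rule sumG[OF r fr])
  also have "\<dots> = (x $ r + x $ (f r)) / 2" unfolding g_def by simp
  finally show ?thesis .
qed

lemma invo_bij: assumes f: "invo f" shows "bij_betw f {0..<m} {0..<m}"
proof (rule bij_betw_byWitness[of _ f])
  show "\<forall>a\<in>{0..<m}. f (f a) = a" "\<forall>a\<in>{0..<m}. f (f a) = a" using invo_D[OF f] by auto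
  show "f ` {0..<m} \<subseteq> {0..<m}" "f ` {0..<m} \<subseteq> {0..<m}" using invo_D[OF f] by auto
qed

lemma sum_reidx: assumes f: "invo f" shows "(\<Sum>r\<in>{0..<m}. g (f r)) = (\<Sum>r\<in>{0..<m}. (g r :: real))"
  using sum.reindex_bij_betw[OF invo_bij[OF f], of g] .

lemma quad: assumes f: "invo f" and x: "x \<in> carrier_vec m"
  shows "x \<bullet> (Wf f *\<^sub>v x) = (\<Sum>r\<in>{0..<m}. (x $ r + x $ (f r))^2) / 4"
    "x \<bullet> x - x \<bullet> (Wf f *\<^sub>v x) = (\<Sum>r\<in>{0..<m}. (x $ r - x $ (f r))^2) / 4"
proof -
  define q where "q = (\<Sum>r\<in>{0..<m}. (x $ r)^2)"
  define s where "s = (\<Sum>r\<in>{0..<m}. x $ r * x $ (f r))"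
  have q2: "(\<Sum>r\<in>{0..<m}. (x $ (f r))^2) = q" unfolding q_def using sum_reidx[OF f, of "\<lambda>r. (x$r)^2"] .
  have xx: "x \<bullet> x = q" using x unfolding q_def by (simp add: scalar_prod_def power2_eq_square)
  have xw: "x \<bullet> (Wf f *\<^sub>v x) = (q + s) / 2"
  proof -
    have "x \<bullet> (Wf f *\<^sub>v x) = (\<Sum>r\<in>{0..<m}. x $ r * (Wf f *\<^sub>v x) $ r)"
      unfolding scalar_prod_def by (simp add: Wf_def del: index_mult_mat_vec)
    also have "\<dots> = (\<Sum>r\<in>{0..<m}. x $ r * ((x $ r + x $ (f r)) / 2))"
      by (rule sum.cong[OF refl], subst Wvec[OF f x], auto)
    also have "\<dots> = (\<Sum>r\<in>{0..<m}. ((x $ r)^2 + x $ r * x $ (f r)) / 2)"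
      by (rule sum.cong) (auto simp: power2_eq_square field_simps)
    also have "\<dots> = (q + s) / 2" unfolding q_def s_def sum_divide_distrib[symmetric] sum.distrib ..
    finally show ?thesis .
  qed
  have e1: "(\<Sum>r\<in>{0..<m}. (x $ r + x $ (f r))^2) = q + 2 * s + q"
  proof -
    have "(\<Sum>r\<in>{0..<m}. (x $ r + x $ (f r))^2) = (\<Sum>r\<in>{0..<m}. (x $ r)^2 + 2 * (x $ r * x $ (f r)) + (x $ (f r))^2)"
      by (rule sum.cong) (auto simp: power2_sum)
    also have "\<dots> = q + 2 * s + (\<Sum>r\<in>{0..<m}. (x $ (f r))^2)"
      unfolding q_def s_def sum.distrib sum_distrib_left ..
    finally show ?thesis using q2 by simp
  qed
  have e2: "(\<Sum>r\<in>{0..<m}. (x $ r - x $ (f r))^2) = q - 2 * s + q"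
  proof -
    have "(\<Sum>r\<in>{0..<m}. (x $ r - x $ (f r))^2) = (\<Sum>r\<in>{0..<m}. (x $ r)^2 - 2 * (x $ r * x $ (f r)) + (x $ (f r))^2)"
      by (rule sum.cong) (auto simp: power2_diff)
    also have "\<dots> = q - 2 * s + (\<Sum>r\<in>{0..<m}. (x $ (f r))^2)"
      unfolding q_def s_def sum.distrib sum_subtractf sum_distrib_left ..
    finally show ?thesis using q2 by simp
  qed
  show "x \<bullet> (Wf f *\<^sub>v x) = (\<Sum>r\<in>{0..<m}. (x $ r + x $ (f r))^2) / 4" using xw e1 by simp
  show "x \<bullet> x - x \<bullet> (Wf f *\<^sub>v x) = (\<Sum>r\<in>{0..<m}. (x $ r - x $ (f r))^2) / 4" using xw e2 xx by simp
qed

end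

context lsetup begin

abbreviation "R \<equiv> {(a, b). {a, b} \<in> EI}"

lemma first_step: assumes "(i,j) \<in> R\<^sup>*" "i \<noteq> j" shows "\<exists>b. {i,b} \<in> EI"
  using assms by (cases rule: converse_rtranclE) auto

lemma N3: "N \<ge> 3"
proof (rule ccontr)
  assume "\<not> N \<ge> 3"
  then have N: "N = 2" using N2 by simp
  have "(1,2) \<in> R\<^sup>*" using conn N unfolding graph_connected_def by auto
  then obtain b where b: "{1,b} \<in> EI" using first_step by fastforce
  then have "b = 2" using edge_ne[OF b] N by auto
  have "graph_complete N EI" unfolding graph_complete_def
  proof (intro ballI impI)
    fix i j :: nat assume "i \<in> {1..N}" "j \<in> {1..N}" "i \<noteq> j"
    then have "(i = 1 \<and> j = 2) \<or> (i = 2 \<and> j = 1)" using N by auto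
    then show "{i,j} \<in> EI" using b \<open>b = 2\<close> by (auto simp: insert_commute)
  qed
  then show False using ncomp by simp
qed

lemma has_edge: assumes i: "i \<in> {1..N}" shows "\<exists>b. {i,b} \<in> EI"
proof -
  define j :: nat where "j = (if i = 1 then 2 else 1)"
  have j: "j \<in> {1..N}" "j \<noteq> i" using N2 i unfolding j_def by auto
  have "(i,j) \<in> R\<^sup>*" using conn i j unfolding graph_connected_def by auto
  then show ?thesis using first_step j by blast
qed

lemma tri_help: assumes "{x,y} = {i,l}" "z \<noteq> x" "z \<noteq> y" "{x,z} \<in> Em" "{y,z} \<in> Em"
  shows "\<exists>c. c \<noteq> i \<and> c \<noteq> l \<and> {i,c} \<in> Em \<and> {l,c} \<in> Em"
proof -
  have "(x = i \<and> y = l) \<or> (x = l \<and> y = i)" using assms(1) by (simp add: doubleton_eq_iff)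
  then show ?thesis using assms by blast
qed

lemma tri: assumes e: "{i,l} \<in> EI" and ne: "{i,l} \<notin> Em"
  shows "\<exists>c. c \<noteq> i \<and> c \<noteq> l \<and> {i,c} \<in> Em \<and> {l,c} \<in> Em"
proof -
  have tf: "triangle_free Em" and all: "\<forall>e\<in>EI - Em. \<not> triangle_free (insert e Em)"
    using mtf unfolding max_triangle_free_spanning_def by blast+
  have mx: "\<not> triangle_free (insert {i,l} Em)" using all e ne by blast
  have ex: "\<exists>a b c. a \<noteq> b \<and> b \<noteq> c \<and> a \<noteq> c \<and> {a,b} \<in> insert {i,l} Em \<and>
    {b,c} \<in> insert {i,l} Em \<and> {a,c} \<in> insert {i,l} Em"
    using mx unfolding triangle_free_def by (simp only: not_not)
  obtain a b c where abc: "a \<noteq> b" "b \<noteq> c" "a \<noteq> c" "{a,b} \<in> insert {i,l} Em"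
    "{b,c} \<in> insert {i,l} Em" "{a,c} \<in> insert {i,l} Em"
    using ex by metis
  have nt: "\<not> ({a,b} \<in> Em \<and> {b,c} \<in> Em \<and> {a,c} \<in> Em)"
  proof
    assume h: "{a,b} \<in> Em \<and> {b,c} \<in> Em \<and> {a,c} \<in> Em"
    have "\<exists>a b c. a \<noteq> b \<and> b \<noteq> c \<and> a \<noteq> c \<and> {a,b} \<in> Em \<and> {b,c} \<in> Em \<and> {a,c} \<in> Em"
      using abc(1-3) h by metis
    then show False using tf unfolding triangle_free_def by (simp only: not_True_eq_False)
  qed
  have d1: "{a,b} \<noteq> {b,c}" "{a,b} \<noteq> {a,c}" "{b,c} \<noteq> {a,c}" using abc(1-3) by (simp_all add: doubleton_eq_iff)
  have ba: "{b,a} = {a,b}" "{c,a} = {a,c}" "{c,b} = {b,c}" by (simp_all add: insert_commute)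
  consider "{a,b} \<notin> Em" | "{b,c} \<notin> Em" | "{a,c} \<notin> Em" using nt by blast
  then show ?thesis
  proof cases
    case 1
    then have q: "{a,b} = {i,l}" using abc(4) by (metis insert_iff)
    have "{a,c} \<in> Em" using abc(6) d1(2) q by (metis insert_iff)
    moreover have "{b,c} \<in> Em" using abc(5) d1(1) q by (metis insert_iff)
    ultimately show ?thesis using tri_help[OF q] abc(1-3) by metis
  next
    case 2
    then have q: "{b,c} = {i,l}" using abc(5) by (metis insert_iff)
    have "{b,a} \<in> Em" using abc(4) d1(1) q ba by (metis insert_iff)
    moreover have "{c,a} \<in> Em" using abc(6) d1(3) q ba by (metis insert_iff)
    ultimately show ?thesis using tri_help[OF q] abc(1-3) by metis
  next
    case 3
    then have q: "{a,c} = {i,l}" using abc(6) by (metis insert_iff)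
    have "{a,b} \<in> Em" using abc(4) d1(2) q by (metis insert_iff)
    moreover have "{c,b} \<in> Em" using abc(5) d1(3) q ba by (metis insert_iff)
    ultimately show ?thesis using tri_help[OF q] abc(1-3) by metis
  qed
qed

lemma nbC_sub: "nbC i \<subseteq> nb i" unfolding nbrs_def using ECI by auto
lemma fin_nbC[simp]: "finite (nbC i)" using nbC_sub fin_nb finite_subset by blast

lemma nbC_ne: assumes i: "i \<in> {1..N}" shows "nbC i \<noteq> {}"
proof -
  obtain b where b: "{i,b} \<in> EI" using has_edge[OF i] by blast
  show ?thesis
  proof (cases "{i,b} \<in> Em")
    case True
    then have "b \<in> nbC i" using EmC edge_ne[OF b] unfolding nbrs_def by auto
    then show ?thesis by auto
  next
    case False
    then obtain c where c: "{i,c} \<in> Em" using tri[OF b] by blast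
    then have "{i,c} \<in> EI" using EmC ECI by auto
    then have "c \<in> nbC i" using c EmC edge_ne unfolding nbrs_def by auto
    then show ?thesis by auto
  qed
qed

lemma good_nbC: assumes "i \<in> {1..N}" "j \<in> nbC i" shows "goodpair i j"
  using assms nbC_sub notin_nb nb_sub unfolding goodpair_def by blast

definition Pr :: "(nat \<times> nat) set" where "Pr = Sigma {1..N} nbC"
definition w :: "nat \<Rightarrow> real" where "w i = 1 / real N * (1 / real (card (nbC i)))"

lemma fin_Pr[simp]: "finite Pr" unfolding Pr_def by auto
lemma Pr_D: "p \<in> Pr \<Longrightarrow> fst p \<in> {1..N} \<and> snd p \<in> nbC (fst p)"
  unfolding Pr_def by (cases p) simp
lemma good_Pr: "p \<in> Pr \<Longrightarrow> goodpair (fst p) (snd p)"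
  using Pr_D good_nbC by blast
lemma w_pos: assumes "p \<in> Pr" shows "w (fst p) > 0"
proof -
  have "nbC (fst p) \<noteq> {}" using Pr_D[OF assms] by blast
  then have "card (nbC (fst p)) > 0" by (simp add: card_gt_0_iff)
  then show ?thesis unfolding w_def using N2 by simp
qed

lemma sum_w: "(\<Sum>p\<in>Pr. w (fst p)) = 1"
proof -
  have "(\<Sum>p\<in>Pr. w (fst p)) = (\<Sum>(i,j)\<in>Pr. w i)" by (simp only: split_def)
  also have "\<dots> = (\<Sum>i\<in>{1..N}. \<Sum>j\<in>nbC i. w i)"
    unfolding Pr_def by (rule sum.Sigma[symmetric]) auto
  also have "\<dots> = (\<Sum>i\<in>{1..N}. 1 / real N)"
  proof (rule sum.cong[OF refl])
    fix i assume i: "i \<in> {1..N}"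
    have "card (nbC i) > 0" using nbC_ne[OF i] by (simp add: card_gt_0_iff)
    then show "(\<Sum>j\<in>nbC i. w i) = 1 / real N" unfolding w_def using nbC_ne[OF i] by simp
  qed
  also have "\<dots> = 1" using N2 by simp
  finally show ?thesis .
qed

lemma E_idx: assumes "r < m" "c < m"
  shows "expect N EC m F $$ (r,c) = (\<Sum>p\<in>Pr. w (fst p) * F (fst p) (snd p) $$ (r,c))"
proof -
  have "expect N EC m F $$ (r,c) = (\<Sum>i\<in>{1..N}. \<Sum>j\<in>nbC i. w i * F i j $$ (r,c))"
    unfolding expect_def w_def using assms by simp
  also have "\<dots> = (\<Sum>p\<in>Pr. w (fst p) * F (fst p) (snd p) $$ (r,c))"
    unfolding Pr_def by (subst sum.Sigma) (simp_all add: split_def)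
  finally show ?thesis .
qed

lemma E_carrier[simp]: "expect N EC m F \<in> carrier_mat m m" unfolding expect_def by simp
lemma E_dim[simp]: "dim_row (expect N EC m F) = m" "dim_col (expect N EC m F) = m" unfolding expect_def by simp_all

abbreviation "Wb \<equiv> expect N EC m (Wmat N EI)"
abbreviation "pv p \<equiv> piv (fst p) (snd p)"

lemma Wb_idx: assumes "r < m" "c < m"
  shows "Wb $$ (r,c) = (\<Sum>p\<in>Pr. w (fst p) * Wf (pv p) $$ (r,c))"
  unfolding E_idx[OF assms] by (rule sum.cong[OF refl]) (simp add: W_Wf good_Pr)

lemma invo_Pr: "p \<in> Pr \<Longrightarrow> invo (pv p)" using invo_piv good_Pr by blast

lemma Wf_rowsum: assumes f: "invo f" and r: "r < m" shows "(\<Sum>c\<in>{0..<m}. Wf f $$ (r,c)) = 1"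
proof -
  have fr: "f r < m" using invo_D[OF f r] by auto
  have "(\<Sum>c\<in>{0..<m}. Wf f $$ (r,c)) = (\<Sum>c\<in>{0..<m}. (of_bool (c = r) + of_bool (c = f r)) * (\<lambda>_. 1/2) c)"
    by (rule sum.cong[OF refl]) (use r in \<open>simp add: Wf_idx\<close>)
  also have "\<dots> = 1" using sumG[OF r fr, of "\<lambda>_. 1/2"] by simp
  finally show ?thesis .
qed

lemma Wb_sym: assumes "r < m" "c < m" shows "Wb $$ (r,c) = Wb $$ (c,r)"
  unfolding Wb_idx[OF assms] Wb_idx[OF assms(2,1)]
  by (rule sum.cong[OF refl]) (simp add: Wf_sym[OF invo_Pr assms])

lemma Wb_nonneg: assumes "r < m" "c < m" shows "Wb $$ (r,c) \<ge> 0"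
  unfolding Wb_idx[OF assms] using w_pos
  by (intro sum_nonneg mult_nonneg_nonneg) (auto simp: Wf_idx assms less_imp_le)

lemma Wb_rowsum: assumes r: "r < m" shows "(\<Sum>c\<in>{0..<m}. Wb $$ (r,c)) = 1"
proof -
  have "(\<Sum>c\<in>{0..<m}. Wb $$ (r,c)) = (\<Sum>c\<in>{0..<m}. \<Sum>p\<in>Pr. w (fst p) * Wf (pv p) $$ (r,c))"
    by (rule sum.cong[OF refl]) (use r in \<open>simp add: Wb_idx\<close>)
  also have "\<dots> = (\<Sum>p\<in>Pr. w (fst p) * (\<Sum>c\<in>{0..<m}. Wf (pv p) $$ (r,c)))"
    by (subst sum.swap) (simp add: sum_distrib_left)
  also have "\<dots> = (\<Sum>p\<in>Pr. w (fst p))"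
    by (rule sum.cong[OF refl]) (simp add: Wf_rowsum[OF invo_Pr r])
  finally show ?thesis using sum_w by simp
qed

lemma Wb_colsum: assumes c: "c < m" shows "(\<Sum>r\<in>{0..<m}. Wb $$ (r,c)) = 1"
proof -
  have "(\<Sum>r\<in>{0..<m}. Wb $$ (r,c)) = (\<Sum>r\<in>{0..<m}. Wb $$ (c,r))"
    by (rule sum.cong[OF refl]) (use c in \<open>simp add: Wb_sym\<close>)
  then show ?thesis using Wb_rowsum[OF c] by simp
qed

lemma ds: "doubly_stochastic Wb"
  unfolding doubly_stochastic_def
  using Wb_nonneg Wb_rowsum Wb_colsum by (simp add: atLeast0LessThan)

lemma M_eq: "expect N EC m (\<lambda>i j. (Qmat N EI i j)\<^sup>T * Qmat N EI i j) = Wb - Pm"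
proof (rule eq_matI)
  fix r c assume "r < dim_row (Wb - Pm)" "c < dim_col (Wb - Pm)"
  then have r: "r < m" and c: "c < m" by auto
  have "expect N EC m (\<lambda>i j. (Qmat N EI i j)\<^sup>T * Qmat N EI i j) $$ (r,c)
     = (\<Sum>p\<in>Pr. w (fst p) * (Wf (pv p) $$ (r,c) - Pm $$ (r,c)))"
    unfolding E_idx[OF r c] by (rule sum.cong[OF refl]) (use r c in \<open>simp add: QQ good_Pr\<close>)
  also have "\<dots> = Wb $$ (r,c) - (\<Sum>p\<in>Pr. w (fst p)) * Pm $$ (r,c)"
    unfolding Wb_idx[OF r c] by (simp add: right_diff_distrib sum_subtractf sum_distrib_right)
  also have "\<dots> = (Wb - Pm) $$ (r,c)" using sum_w r c by simp
  finally show "expect N EC m (\<lambda>i j. (Qmat N EI i j)\<^sup>T * Qmat N EI i j) $$ (r,c) = (Wb - Pm) $$ (r,c)" .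
qed auto

lemma mv_idx: assumes "A \<in> carrier_mat m m" "x \<in> carrier_vec m" "r < m"
  shows "(A *\<^sub>v x) $ r = (\<Sum>k\<in>{0..<m}. A $$ (r,k) * x $ k)"
  using assms by (simp add: scalar_prod_def)

lemma Wb_vec: assumes x: "x \<in> carrier_vec m" and r: "r < m"
  shows "(Wb *\<^sub>v x) $ r = (\<Sum>p\<in>Pr. w (fst p) * (Wf (pv p) *\<^sub>v x) $ r)"
proof -
  have "(Wb *\<^sub>v x) $ r = (\<Sum>k\<in>{0..<m}. \<Sum>p\<in>Pr. w (fst p) * Wf (pv p) $$ (r,k) * x $ k)"
    by (subst mv_idx[OF E_carrier x r], rule sum.cong[OF refl]) (use r in \<open>simp add: Wb_idx sum_distrib_right\<close>)
  also have "\<dots> = (\<Sum>p\<in>Pr. w (fst p) * (\<Sum>k\<in>{0..<m}. Wf (pv p) $$ (r,k) * x $ k))"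
    by (subst sum.swap) (simp add: sum_distrib_left mult.assoc)
  also have "\<dots> = (\<Sum>p\<in>Pr. w (fst p) * (Wf (pv p) *\<^sub>v x) $ r)"
    by (rule sum.cong[OF refl]) (simp add: mv_idx[OF Wf_carrier x r])
  finally show ?thesis .
qed

lemma sp_idx: assumes "y \<in> carrier_vec m" shows "x \<bullet> y = (\<Sum>r\<in>{0..<m}. x $ r * y $ r)"
  using assms unfolding scalar_prod_def by simp

lemma Wb_quad: assumes x: "x \<in> carrier_vec m"
  shows "x \<bullet> (Wb *\<^sub>v x) = (\<Sum>p\<in>Pr. w (fst p) * (x \<bullet> (Wf (pv p) *\<^sub>v x)))"
proof -
  have "x \<bullet> (Wb *\<^sub>v x) = (\<Sum>r\<in>{0..<m}. x $ r * (\<Sum>p\<in>Pr. w (fst p) * (Wf (pv p) *\<^sub>v x) $ r))"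
  proof -
    have "x \<bullet> (Wb *\<^sub>v x) = (\<Sum>r\<in>{0..<m}. x $ r * (Wb *\<^sub>v x) $ r)" by (rule sp_idx, rule mult_mat_vec_carrier[OF E_carrier x])
    also have "\<dots> = (\<Sum>r\<in>{0..<m}. x $ r * (\<Sum>p\<in>Pr. w (fst p) * (Wf (pv p) *\<^sub>v x) $ r))"
      by (rule sum.cong[OF refl], subst Wb_vec[OF x], auto)
    finally show ?thesis .
  qed
  also have "\<dots> = (\<Sum>r\<in>{0..<m}. \<Sum>p\<in>Pr. w (fst p) * (x $ r * (Wf (pv p) *\<^sub>v x) $ r))"
    by (simp add: sum_distrib_left mult.left_commute)
  also have "\<dots> = (\<Sum>p\<in>Pr. \<Sum>r\<in>{0..<m}. w (fst p) * (x $ r * (Wf (pv p) *\<^sub>v x) $ r))"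
    by (rule sum.swap)
  also have "\<dots> = (\<Sum>p\<in>Pr. w (fst p) * (\<Sum>r\<in>{0..<m}. x $ r * (Wf (pv p) *\<^sub>v x) $ r))"
    by (simp add: sum_distrib_left)
  also have "\<dots> = (\<Sum>p\<in>Pr. w (fst p) * (x \<bullet> (Wf (pv p) *\<^sub>v x)))"
    by (rule sum.cong[OF refl]) (subst sp_idx[of "Wf _ *\<^sub>v x"], rule mult_mat_vec_carrier[OF Wf_carrier x], simp)
  finally show ?thesis .
qed

end

context lsetup begin

lemma m_pos: "m > 0"
proof -
  have "md 1 \<le> m" unfolding mtot_def using N2 by (intro member_le_sum) auto
  moreover have "md 1 > 0" unfolding mdeg_def by simp
  ultimately show ?thesis by simp
qed

definition ones :: "real vec" where "ones = vec m (\<lambda>_. 1)"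
definition cons :: "real vec \<Rightarrow> bool" where "cons x \<longleftrightarrow> (\<forall>r<m. x $ r = x $ pos (var r) (var r))"

lemma ones_carrier[simp]: "ones \<in> carrier_vec m" unfolding ones_def by simp
lemma ones_ne: "ones \<noteq> 0\<^sub>v m"
proof
  assume "ones = 0\<^sub>v m"
  then have "ones $ 0 = 0\<^sub>v m $ 0" by simp
  then show False using m_pos unfolding ones_def by simp
qed
lemma cons_ones: "cons ones" unfolding cons_def
proof (intro allI impI)
  fix r assume r: "r < m"
  have "pos (var r) (var r) < m" using pos_lt_m[OF var_range[OF r] self_cn] .
  then show "ones $ r = ones $ pos (var r) (var r)" using r unfolding ones_def by simp
qed

lemma Wb_ones: "Wb *\<^sub>v ones = ones"
proof (rule eq_vecI)
  fix r assume "r < dim_vec ones"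
  then have r: "r < m" by (simp add: ones_def)
  have "(Wb *\<^sub>v ones) $ r = (\<Sum>k\<in>{0..<m}. Wb $$ (r,k) * ones $ k)" by (rule mv_idx[OF E_carrier ones_carrier r])
  also have "\<dots> = (\<Sum>k\<in>{0..<m}. Wb $$ (r,k))" by (rule sum.cong) (auto simp: ones_def)
  also have "\<dots> = 1" using Wb_rowsum[OF r] .
  finally show "(Wb *\<^sub>v ones) $ r = ones $ r" using r by (simp add: ones_def)
qed (simp add: ones_def)

lemma P_cons: assumes x: "x \<in> carrier_vec m" and c: "cons x" shows "Pm *\<^sub>v x = x"
proof (rule eq_vecI)
  fix r assume "r < dim_vec x"
  then have r: "r < m" using x by simp
  define cc where "cc = pos (var r) (var r)"
  have v: "var r \<in> {1..N}" using var_range[OF r] .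
  have mdp: "real (md (var r)) > 0" unfolding mdeg_def by simp
  have "(Pm *\<^sub>v x) $ r = (\<Sum>k\<in>{0..<m}. Pm $$ (r,k) * x $ k)" by (rule mv_idx[OF Pm_carrier x r])
  also have "\<dots> = (\<Sum>k\<in>{0..<m}. if var k = var r then x $ cc / real (md (var r)) else 0)"
  proof (rule sum.cong[OF refl])
    fix k assume "k \<in> {0..<m}"
    then have k: "k < m" by simp
    show "Pm $$ (r,k) * x $ k = (if var k = var r then x $ cc / real (md (var r)) else 0)"
      using c k r unfolding cons_def cc_def by (auto simp: Pm_idx)
  qed
  also have "\<dots> = (\<Sum>k\<in>{k\<in>{0..<m}. var k = var r}. x $ cc / real (md (var r)))"
    by (subst sum.inter_filter) auto
  also have "\<dots> = real (md (var r)) * (x $ cc / real (md (var r)))" using cnt_var[OF v] by simp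
  also have "\<dots> = x $ r" using mdp c r unfolding cons_def cc_def by simp
  finally show "(Pm *\<^sub>v x) $ r = x $ r" .
qed (use x in simp)

lemma PWb: "Pm * Wb = Pm"
proof (rule eq_matI)
  fix r c assume "r < dim_row Pm" "c < dim_col Pm"
  then have r: "r < m" and c: "c < m" by auto
  have "(Pm * Wb) $$ (r,c) = (\<Sum>k\<in>{0..<m}. Pm $$ (r,k) * Wb $$ (k,c))" by (rule mult_idx[OF Pm_carrier E_carrier r c])
  also have "\<dots> = (\<Sum>k\<in>{0..<m}. \<Sum>p\<in>Pr. w (fst p) * (Pm $$ (r,k) * Wf (pv p) $$ (k,c)))"
    by (rule sum.cong[OF refl]) (use c in \<open>simp add: Wb_idx sum_distrib_left mult.left_commute\<close>)
  also have "\<dots> = (\<Sum>p\<in>Pr. \<Sum>k\<in>{0..<m}. w (fst p) * (Pm $$ (r,k) * Wf (pv p) $$ (k,c)))"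
    by (rule sum.swap)
  also have "\<dots> = (\<Sum>p\<in>Pr. w (fst p) * (Pm * Wf (pv p)) $$ (r,c))"
    by (rule sum.cong[OF refl]) (simp add: mult_idx[OF Pm_carrier Wf_carrier r c] sum_distrib_left)
  also have "\<dots> = (\<Sum>p\<in>Pr. w (fst p) * Pm $$ (r,c))"
    by (rule sum.cong[OF refl]) (simp add: PW[OF invo_Pr])
  also have "\<dots> = Pm $$ (r,c)" using sum_w by (simp add: sum_distrib_right[symmetric])
  finally show "(Pm * Wb) $$ (r,c) = Pm $$ (r,c)" .
qed auto

lemma pos_sp: fixes v :: "real vec" assumes v: "v \<in> carrier_vec m" "v \<noteq> 0\<^sub>v m" shows "v \<bullet> v > 0"
proof -
  obtain r where r: "r < m" "v $ r \<noteq> 0"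
  proof (rule ccontr)
    assume "\<not> thesis"
    then have "\<forall>r<m. v $ r = 0" using that by blast
    then have "v = 0\<^sub>v m" using v(1) by (intro eq_vecI) auto
    then show False using v(2) by simp
  qed
  have "v \<bullet> v = (\<Sum>k\<in>{0..<m}. (v $ k)^2)" using v(1) by (simp add: sp_idx power2_eq_square)
  also have "\<dots> > 0" using r by (intro sum_pos2[of _ r]) auto
  finally show ?thesis .
qed

lemma Wq_nonneg: assumes f: "invo f" and x: "x \<in> carrier_vec m"
  shows "0 \<le> x \<bullet> (Wf f *\<^sub>v x)" "x \<bullet> (Wf f *\<^sub>v x) \<le> x \<bullet> x"
proof -
  have "0 \<le> (\<Sum>r\<in>{0..<m}. (x $ r + x $ (f r))^2) / 4" by (intro divide_nonneg_pos sum_nonneg) auto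
  then show "0 \<le> x \<bullet> (Wf f *\<^sub>v x)" using quad(1)[OF f x] by simp
  have "0 \<le> (\<Sum>r\<in>{0..<m}. (x $ r - x $ (f r))^2) / 4" by (intro divide_nonneg_pos sum_nonneg) auto
  then show "x \<bullet> (Wf f *\<^sub>v x) \<le> x \<bullet> x" using quad(2)[OF f x] by simp
qed

lemma Wb_diff: assumes x: "x \<in> carrier_vec m"
  shows "x \<bullet> x - x \<bullet> (Wb *\<^sub>v x) = (\<Sum>p\<in>Pr. w (fst p) * (x \<bullet> x - x \<bullet> (Wf (pv p) *\<^sub>v x)))"
proof -
  have "x \<bullet> x = (\<Sum>p\<in>Pr. w (fst p) * (x \<bullet> x))" using sum_w by (simp add: sum_distrib_right[symmetric])
  then show ?thesis unfolding Wb_quad[OF x] by (simp add: right_diff_distrib sum_subtractf)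
qed

lemma Wb_q: assumes x: "x \<in> carrier_vec m"
  shows "0 \<le> x \<bullet> (Wb *\<^sub>v x)" "x \<bullet> (Wb *\<^sub>v x) \<le> x \<bullet> x"
proof -
  show "0 \<le> x \<bullet> (Wb *\<^sub>v x)" unfolding Wb_quad[OF x]
    using w_pos Wq_nonneg(1)[OF invo_Pr x] by (intro sum_nonneg mult_nonneg_nonneg) (auto simp: less_imp_le)
  have "0 \<le> x \<bullet> x - x \<bullet> (Wb *\<^sub>v x)" unfolding Wb_diff[OF x]
    using w_pos Wq_nonneg(2)[OF invo_Pr x] by (intro sum_nonneg mult_nonneg_nonneg) (auto simp: less_imp_le)
  then show "x \<bullet> (Wb *\<^sub>v x) \<le> x \<bullet> x" by simp
qed

lemma eig_bounds: assumes "eigenvalue Wb k" shows "0 \<le> k" "k \<le> 1"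
proof -
  obtain v where v: "v \<in> carrier_vec m" "v \<noteq> 0\<^sub>v m" "Wb *\<^sub>v v = k \<cdot>\<^sub>v v"
    using assms unfolding eigenvalue_def eigenvector_def by auto
  have e: "v \<bullet> (Wb *\<^sub>v v) = k * (v \<bullet> v)" using v by simp
  have p: "v \<bullet> v > 0" using pos_sp[OF v(1,2)] .
  show "0 \<le> k" using Wb_q(1)[OF v(1)] e p by (simp add: zero_le_mult_iff)
  show "k \<le> 1" using Wb_q(2)[OF v(1)] e p by simp
qed

lemma piv_app: assumes "i \<in> {1..N}" "j \<in> {1..N}" "i \<noteq> j" "s < m" "own s = i" "var s \<in> ind N EI i j"
  shows "piv i j s = pos j (var s)"
  using assms unfolding piv_def by simp

lemma graph_arg: assumes h: "\<forall>p\<in>Pr. \<forall>r<m. v $ r = v $ (pv p r)" shows "cons v"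
  unfolding cons_def
proof (intro allI impI)
  fix r assume r: "r < m"
  define i where "i = own r"
  define l where "l = var r"
  have i: "i \<in> {1..N}" using own_range[OF r] unfolding i_def .
  have li: "l \<in> cn i" using var_cn[OF r] unfolding i_def l_def .
  have rr: "r = pos i l" using pos_own_var[OF r] unfolding i_def l_def by (rule sym)
  have l1: "l \<in> {1..N}" using var_range[OF r] unfolding l_def .
  have o: "own r = i" "var r = l" unfolding i_def l_def by simp_all
  show "v $ r = v $ pos (var r) (var r)"
  proof (cases "l = i")
    case True
    then have "pos l l = r" using rr by simp
    then have "pos (var r) (var r) = r" unfolding l_def .
    then show ?thesis by simp
  next
    case False
    then have e: "{i,l} \<in> EI" using li unfolding cnbrs_def nbrs_def by auto
    have lcl: "l \<in> cn l" by (rule self_cn)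
    show ?thesis
    proof (cases "{i,l} \<in> EC")
      case True
      have "l \<in> nbC i" using True l1 unfolding nbrs_def by auto
      then have p: "(i,l) \<in> Pr" using i unfolding Pr_def by auto
      have ind: "var r \<in> ind N EI i l" unfolding ind_def o(2) using li lcl by simp
      have "piv i l r = pos l l" using piv_app[OF i l1 _ r o(1) ind] False o(2) by simp
      moreover have "v $ r = v $ piv i l r" using h[rule_format, OF p r] by simp
      ultimately show ?thesis using o(2) by simp
    next
      case False2: False
      then have "{i,l} \<notin> Em" using EmC by auto
      then obtain c where c: "c \<noteq> i" "c \<noteq> l" "{i,c} \<in> Em" "{l,c} \<in> Em" using tri[OF e] by blast
      have ic: "{i,c} \<in> EC" "{c,l} \<in> EC" using c EmC by (auto simp: insert_commute)
      have c1: "c \<in> {1..N}" using edge_ne[of i c] ic ECI by auto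
      have lc: "l \<in> cn c" using ic ECI l1 unfolding cnbrs_def nbrs_def by auto
      have p1: "(i,c) \<in> Pr" using i c1 ic unfolding Pr_def nbrs_def by auto
      have p2: "(c,l) \<in> Pr" using c1 l1 ic unfolding Pr_def nbrs_def by auto
      have s: "pos c l < m" "own (pos c l) = c" "var (pos c l) = l"
        using pos_lt_m[OF c1 lc] ownvar_pos[OF c1 lc] by auto
      have ind1: "var r \<in> ind N EI i c" unfolding ind_def o(2) using li lc by simp
      have a1: "piv i c r = pos c l" using piv_app[OF i c1 _ r o(1) ind1] c(1) o(2) by simp
      have a2: "piv c l (pos c l) = pos l l"
        using piv_app[OF c1 l1 c(2) s(1) s(2)] s lc lcl unfolding ind_def by auto
      have "v $ r = v $ pos c l" using h[rule_format, OF p1 r] a1 by simp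
      also have "\<dots> = v $ pos l l" using h[rule_format, OF p2 s(1)] a2 by simp
      finally show ?thesis using o(2) by simp
    qed
  qed
qed

lemma fix_cons: assumes v: "v \<in> carrier_vec m" and fx: "Wb *\<^sub>v v = v" shows "cons v"
proof -
  have z: "(\<Sum>p\<in>Pr. w (fst p) * (v \<bullet> v - v \<bullet> (Wf (pv p) *\<^sub>v v))) = 0"
    using Wb_diff[OF v] fx by simp
  have nn: "\<forall>p\<in>Pr. 0 \<le> w (fst p) * (v \<bullet> v - v \<bullet> (Wf (pv p) *\<^sub>v v))"
  proof
    fix p assume p: "p \<in> Pr"
    have "0 \<le> w (fst p)" using w_pos[OF p] by simp
    moreover have "0 \<le> v \<bullet> v - v \<bullet> (Wf (pv p) *\<^sub>v v)" using Wq_nonneg(2)[OF invo_Pr[OF p] v] by simp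
    ultimately show "0 \<le> w (fst p) * (v \<bullet> v - v \<bullet> (Wf (pv p) *\<^sub>v v))" by (rule mult_nonneg_nonneg)
  qed
  have all0: "\<forall>p\<in>Pr. w (fst p) * (v \<bullet> v - v \<bullet> (Wf (pv p) *\<^sub>v v)) = 0"
    using sum_nonneg_eq_0_iff[OF fin_Pr, of "\<lambda>p. w (fst p) * (v \<bullet> v - v \<bullet> (Wf (pv p) *\<^sub>v v))"] nn z
    by (simp only: Ball_def) (meson)
  show ?thesis
  proof (rule graph_arg, intro ballI allI impI)
    fix p r assume p: "p \<in> Pr" and r: "r < m"
    have "w (fst p) * (v \<bullet> v - v \<bullet> (Wf (pv p) *\<^sub>v v)) = 0" using all0 p by blast
    then have "v \<bullet> v - v \<bullet> (Wf (pv p) *\<^sub>v v) = 0" using w_pos[OF p] by (simp only: mult_eq_0_iff) linarith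
    then have "(\<Sum>s\<in>{0..<m}. (v $ s - v $ (pv p s))^2) = 0" using quad(2)[OF invo_Pr[OF p] v] by simp
    then have "\<forall>s\<in>{0..<m}. (v $ s - v $ (pv p s))^2 = 0"
      using sum_nonneg_eq_0_iff[of "{0..<m}" "\<lambda>s. (v $ s - v $ (pv p s))^2"] by auto
    then show "v $ r = v $ (pv p r)" using r by auto
  qed
qed

abbreviation "Mm \<equiv> Wb - Pm"

lemma Mm_carrier[simp]: "Mm \<in> carrier_mat m m" using Pm_carrier by (rule minus_carrier_mat)

lemma Mm_vec: "v \<in> carrier_vec m \<Longrightarrow> Mm *\<^sub>v v = Wb *\<^sub>v v - Pm *\<^sub>v v"
  by (rule minus_mult_distrib_mat_vec[OF E_carrier Pm_carrier])

lemma smult_self: fixes y :: "real vec" assumes y: "y \<in> carrier_vec m" and e: "k \<cdot>\<^sub>v y = y" and k: "k \<noteq> 1"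
  shows "y = 0\<^sub>v m"
proof (rule eq_vecI)
  fix r assume "r < dim_vec (0\<^sub>v m)"
  then have r: "r < m" by simp
  have "(k \<cdot>\<^sub>v y) $ r = y $ r" using arg_cong[OF e, of "\<lambda>z. z $ r"] .
  moreover have "(k \<cdot>\<^sub>v y) $ r = k * y $ r" using y r by (intro index_smult_vec(1)) simp
  ultimately have "k * y $ r = y $ r" by simp
  then have "(k - 1) * y $ r = 0" by (simp add: algebra_simps)
  then have "y $ r = 0" using k by simp
  then show "y $ r = 0\<^sub>v m $ r" using r by simp
qed (use y in simp)

lemma P_Wb_vec: assumes v: "v \<in> carrier_vec m" shows "Pm *\<^sub>v (Wb *\<^sub>v v) = Pm *\<^sub>v v"
proof -
  have "(Pm * Wb) *\<^sub>v v = Pm *\<^sub>v (Wb *\<^sub>v v)" by (rule assoc_mult_mat_vec[OF Pm_carrier E_carrier v])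
  then show ?thesis unfolding PWb by simp
qed

lemma P_P_vec: assumes v: "v \<in> carrier_vec m" shows "Pm *\<^sub>v (Pm *\<^sub>v v) = Pm *\<^sub>v v"
proof -
  have "(Pm * Pm) *\<^sub>v v = Pm *\<^sub>v (Pm *\<^sub>v v)" by (rule assoc_mult_mat_vec[OF Pm_carrier Pm_carrier v])
  then show ?thesis unfolding PP by simp
qed

lemma eig_M_of_Wb: assumes "eigenvalue Wb k" "k \<noteq> 1" shows "eigenvalue Mm k"
proof -
  obtain v where v: "v \<in> carrier_vec m" "v \<noteq> 0\<^sub>v m" "Wb *\<^sub>v v = k \<cdot>\<^sub>v v"
    using assms unfolding eigenvalue_def eigenvector_def by auto
  have "Pm *\<^sub>v v = Pm *\<^sub>v (Wb *\<^sub>v v)" using P_Wb_vec[OF v(1)] by simp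
  also have "\<dots> = k \<cdot>\<^sub>v (Pm *\<^sub>v v)" unfolding v(3) by (rule mult_mat_vec[OF Pm_carrier v(1)])
  finally have e: "Pm *\<^sub>v v = k \<cdot>\<^sub>v (Pm *\<^sub>v v)" .
  have "Pm *\<^sub>v v = 0\<^sub>v m" by (rule smult_self[OF mult_mat_vec_carrier[OF Pm_carrier v(1)] e[symmetric] assms(2)])
  then have "Mm *\<^sub>v v = k \<cdot>\<^sub>v v" using Mm_vec[OF v(1)] v by simp
  then show ?thesis unfolding eigenvalue_def eigenvector_def using v by auto
qed

lemma eig_Wb_of_M: assumes "eigenvalue Mm k" "k \<noteq> 0" shows "eigenvalue Wb k" "k \<noteq> 1"
proof -
  obtain v where v: "v \<in> carrier_vec m" "v \<noteq> 0\<^sub>v m" "Mm *\<^sub>v v = k \<cdot>\<^sub>v v"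
    using assms unfolding eigenvalue_def eigenvector_def by auto
  have wv: "Wb *\<^sub>v v \<in> carrier_vec m" "Pm *\<^sub>v v \<in> carrier_vec m"
    using mult_mat_vec_carrier[OF E_carrier v(1)] mult_mat_vec_carrier[OF Pm_carrier v(1)] by auto
  have "k \<cdot>\<^sub>v (Pm *\<^sub>v v) = Pm *\<^sub>v (k \<cdot>\<^sub>v v)" by (rule mult_mat_vec[OF Pm_carrier v(1), symmetric])
  also have "\<dots> = Pm *\<^sub>v (Wb *\<^sub>v v - Pm *\<^sub>v v)" unfolding v(3)[symmetric] Mm_vec[OF v(1)] ..
  also have "\<dots> = Pm *\<^sub>v (Wb *\<^sub>v v) - Pm *\<^sub>v (Pm *\<^sub>v v)"
    by (rule mult_minus_distrib_mat_vec[OF Pm_carrier wv])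
  also have "\<dots> = 0\<^sub>v m" unfolding P_Wb_vec[OF v(1)] P_P_vec[OF v(1)] by (rule minus_cancel_vec[OF wv(2)])
  finally have kp: "k \<cdot>\<^sub>v (Pm *\<^sub>v v) = 0\<^sub>v m" .
  have P0: "Pm *\<^sub>v v = 0\<^sub>v m"
  proof (rule eq_vecI)
    fix r assume "r < dim_vec (0\<^sub>v m)"
    then have r: "r < m" by simp
    have "k * (Pm *\<^sub>v v) $ r = 0" using arg_cong[OF kp, of "\<lambda>y. y $ r"] r by simp
    then show "(Pm *\<^sub>v v) $ r = 0\<^sub>v m $ r" using assms(2) r by simp
  qed simp
  have Wv: "Wb *\<^sub>v v = k \<cdot>\<^sub>v v"
  proof -
    have "Wb *\<^sub>v v - Pm *\<^sub>v v = k \<cdot>\<^sub>v v" using v(3) Mm_vec[OF v(1)] by simp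
    then show ?thesis unfolding P0 using minus_zero_vec[OF wv(1)] by simp
  qed
  show "eigenvalue Wb k" unfolding eigenvalue_def eigenvector_def using v Wv by auto
  show "k \<noteq> 1"
  proof
    assume k1: "k = 1"
    then have "Wb *\<^sub>v v = v" using Wv v(1) by simp
    then have "cons v" using fix_cons v(1) by blast
    then have "Pm *\<^sub>v v = v" using P_cons v(1) by blast
    then show False using P0 v(2) by simp
  qed
qed

lemma eig_M_0: "eigenvalue Mm 0"
proof -
  have "Mm *\<^sub>v ones = 0 \<cdot>\<^sub>v ones"
    unfolding Mm_vec[OF ones_carrier] Wb_ones P_cons[OF ones_carrier cons_ones]
    by (rule eq_vecI) (auto simp: ones_def)
  then show ?thesis unfolding eigenvalue_def eigenvector_def using ones_ne
    by (intro exI[of _ ones]) simp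
qed

end


lemma herm_real:
  fixes A :: "real mat"
  assumes A: "A \<in> carrier_mat n n" and sym: "\<And>i j. i < n \<Longrightarrow> j < n \<Longrightarrow> A $$ (i,j) = A $$ (j,i)"
    and ev: "eigenvalue (map_mat complex_of_real A) a"
  shows "a \<in> \<real>"
proof -
  let ?Ac = "map_mat complex_of_real A"
  obtain z where z: "z \<in> carrier_vec n" "z \<noteq> 0\<^sub>v n" "?Ac *\<^sub>v z = a \<cdot>\<^sub>v z"
    using ev A unfolding eigenvalue_def eigenvector_def by auto
  define s where "s = (\<Sum>i\<in>{0..<n}. cnj (z$i) * (?Ac *\<^sub>v z)$i)"
  define t where "t = (\<Sum>i\<in>{0..<n}. cnj (z$i) * z$i)"
  have s_a: "s = a * t" unfolding s_def t_def z(3) sum_distrib_left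
    by (rule sum.cong[OF refl]) (use z(1) in simp)
  have s_exp: "s = (\<Sum>i\<in>{0..<n}. \<Sum>j\<in>{0..<n}. of_real (A$$(i,j)) * (cnj (z$i) * z$j))"
    unfolding s_def
  proof (rule sum.cong[OF refl])
    fix i assume "i \<in> {0..<n}"
    then have i: "i < n" by simp
    have "(?Ac *\<^sub>v z) $ i = (\<Sum>j\<in>{0..<n}. of_real (A$$(i,j)) * z$j)"
      using i A z(1) by (simp add: scalar_prod_def)
    then show "cnj (z$i) * (?Ac *\<^sub>v z) $ i = (\<Sum>j\<in>{0..<n}. of_real (A$$(i,j)) * (cnj (z$i) * z$j))"
      by (simp add: sum_distrib_left mult.left_commute)
  qed
  have "cnj s = (\<Sum>i\<in>{0..<n}. \<Sum>j\<in>{0..<n}. of_real (A$$(i,j)) * (z$i * cnj (z$j)))"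
    unfolding s_exp cnj_sum by (simp add: mult.commute)
  also have "\<dots> = (\<Sum>j\<in>{0..<n}. \<Sum>i\<in>{0..<n}. of_real (A$$(i,j)) * (z$i * cnj (z$j)))"
    by (rule sum.swap)
  also have "\<dots> = s" unfolding s_exp
    by (rule sum.cong[OF refl], rule sum.cong[OF refl]) (simp add: sym mult.commute)
  finally have sR: "s \<in> \<real>" using Reals_cnj_iff by blast
  have tR: "t \<in> \<real>" unfolding Reals_cnj_iff t_def cnj_sum by (simp add: mult.commute)
  obtain r where r: "r < n" "z $ r \<noteq> 0"
  proof (rule ccontr)
    assume "\<not> thesis"
    then have "\<forall>r<n. z $ r = 0" using that by blast
    then have "z = 0\<^sub>v n" using z(1) by (intro eq_vecI) auto
    then show False using z(2) by simp
  qed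
  have "Re t = (\<Sum>i\<in>{0..<n}. (Re (z$i))^2 + (Im (z$i))^2)"
    unfolding t_def Re_sum by (simp add: power2_eq_square)
  also have "\<dots> > 0"
  proof (rule sum_pos2[of _ r])
    show "0 < (Re (z$r))^2 + (Im (z$r))^2" using r(2) by (simp add: sum_power2_gt_zero_iff complex_eq_iff)
  qed (use r in auto)
  finally have "t \<noteq> 0" by auto
  then have "a = s / t" using s_a by simp
  then show ?thesis using sR tR by simp
qed

lemma strict_upper_pow:
  fixes B :: "'a :: comm_ring_1 mat"
  assumes B: "B \<in> carrier_mat n n" and su: "\<And>i j. i < n \<Longrightarrow> j < n \<Longrightarrow> j \<le> i \<Longrightarrow> B $$ (i,j) = 0"
  shows "i < n \<Longrightarrow> j < n \<Longrightarrow> j < i + k \<Longrightarrow> (B ^\<^sub>m k) $$ (i,j) = 0"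
proof (induction k arbitrary: i j)
  case 0
  then show ?case using B by simp
next
  case (Suc k)
  have "(B ^\<^sub>m Suc k) $$ (i,j) = (B ^\<^sub>m k * B) $$ (i,j)" by simp
  also have "\<dots> = (\<Sum>l\<in>{0..<n}. (B ^\<^sub>m k) $$ (i,l) * B $$ (l,j))"
    using Suc.prems B by (simp add: scalar_prod_def)
  also have "\<dots> = 0"
  proof (rule sum.neutral, rule ballI)
    fix l assume "l \<in> {0..<n}"
    then have l: "l < n" by simp
    show "(B ^\<^sub>m k) $$ (i,l) * B $$ (l,j) = 0"
    proof (cases "l < i + k")
      case True
      then show ?thesis using Suc.IH[OF Suc.prems(1) l] by simp
    next
      case False
      then have "j \<le> l" using Suc.prems(3) by simp
      then show ?thesis using su[OF l Suc.prems(2)] by simp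
    qed
  qed
  finally show ?case .
qed

lemma sym_dot:
  fixes A :: "real mat"
  assumes A: "A \<in> carrier_mat n n" and sym: "\<And>i j. i < n \<Longrightarrow> j < n \<Longrightarrow> A $$ (i,j) = A $$ (j,i)"
    and v: "v \<in> carrier_vec n" and w: "w \<in> carrier_vec n"
  shows "(A *\<^sub>v v) \<bullet> w = v \<bullet> (A *\<^sub>v w)"
proof -
  have "(A *\<^sub>v v) \<bullet> w = (\<Sum>i\<in>{0..<n}. (\<Sum>j\<in>{0..<n}. A $$ (i,j) * v $ j) * w $ i)"
    using A v w by (simp add: scalar_prod_def)
  also have "\<dots> = (\<Sum>i\<in>{0..<n}. \<Sum>j\<in>{0..<n}. A $$ (i,j) * v $ j * w $ i)"
    by (simp add: sum_distrib_right)
  also have "\<dots> = (\<Sum>j\<in>{0..<n}. \<Sum>i\<in>{0..<n}. A $$ (i,j) * v $ j * w $ i)"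
    by (rule sum.swap)
  also have "\<dots> = (\<Sum>j\<in>{0..<n}. v $ j * (\<Sum>i\<in>{0..<n}. A $$ (j,i) * w $ i))"
    unfolding sum_distrib_left by (rule sum.cong[OF refl], rule sum.cong[OF refl]) (simp add: sym)
  also have "\<dots> = v \<bullet> (A *\<^sub>v w)"
    using A v w by (simp add: scalar_prod_def)
  finally show ?thesis .
qed

lemma self_dot_zero:
  fixes x :: "real vec"
  assumes x: "x \<in> carrier_vec n" and z: "x \<bullet> x = 0" shows "x = 0\<^sub>v n"
proof (rule eq_vecI)
  fix i assume "i < dim_vec (0\<^sub>v n)"
  then have i: "i < n" by simp
  have "(\<Sum>k\<in>{0..<n}. (x $ k)^2) = 0" using z x by (simp add: scalar_prod_def power2_eq_square)
  then have "\<forall>k\<in>{0..<n}. (x $ k)^2 = 0" by (subst sum_nonneg_eq_0_iff[symmetric]) auto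
  then show "x $ i = 0\<^sub>v n $ i" using i by simp
qed (use x in simp)

lemma sym_nil:
  fixes A :: "real mat"
  assumes A: "A \<in> carrier_mat n n" and sym: "\<And>i j. i < n \<Longrightarrow> j < n \<Longrightarrow> A $$ (i,j) = A $$ (j,i)"
  shows "v \<in> carrier_vec n \<Longrightarrow> (A ^\<^sub>m Suc k) *\<^sub>v v = 0\<^sub>v n \<Longrightarrow> A *\<^sub>v v = 0\<^sub>v n"
proof (induction k arbitrary: v)
  case 0
  have "A ^\<^sub>m Suc 0 = A" using A by simp
  then show ?case using 0 by simp
next
  case (Suc k)
  have Av: "A *\<^sub>v v \<in> carrier_vec n" using A Suc.prems(1) by simp
  have "(A ^\<^sub>m Suc k) *\<^sub>v (A *\<^sub>v v) = (A ^\<^sub>m Suc k * A) *\<^sub>v v"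
    by (rule assoc_mult_mat_vec[symmetric, OF pow_carrier_mat[OF A] A Suc.prems(1)])
  also have "\<dots> = 0\<^sub>v n" using Suc.prems(2) by (simp only: pow_mat.simps(2))
  finally have AAv: "A *\<^sub>v (A *\<^sub>v v) = 0\<^sub>v n" using Suc.IH[OF Av] by simp
  have "(A *\<^sub>v v) \<bullet> (A *\<^sub>v v) = v \<bullet> (A *\<^sub>v (A *\<^sub>v v))" by (rule sym_dot[OF A sym Suc.prems(1) Av])
  also have "\<dots> = 0" unfolding AAv using Suc.prems(1) by simp
  finally show ?case by (rule self_dot_zero[OF Av])
qed

lemma prod_root: "a \<in> set as \<Longrightarrow> poly (\<Prod>b\<leftarrow>as. [:- b, 1:]) (a :: complex) = 0"
  by (induction as) auto

lemma sym_eig_zero: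
  fixes A :: "real mat"
  assumes A: "A \<in> carrier_mat n n" and sym: "\<And>i j. i < n \<Longrightarrow> j < n \<Longrightarrow> A $$ (i,j) = A $$ (j,i)"
    and ev0: "\<And>k. eigenvalue A k \<Longrightarrow> k = 0"
  shows "A ^\<^sub>m n = 0\<^sub>m n n"
proof -
  let ?Ac = "map_mat complex_of_real A"
  have Ac: "?Ac \<in> carrier_mat n n" using A by simp
  obtain as where cp: "char_poly ?Ac = (\<Prod>a\<leftarrow>as. [:- a, 1:])" using char_poly_factorized[OF Ac] by blast
  have as0: "a = 0" if a: "a \<in> set as" for a
  proof -
    have "poly (char_poly ?Ac) a = 0" unfolding cp by (rule prod_root[OF a])
    then have eva: "eigenvalue ?Ac a" using eigenvalue_root_char_poly[OF Ac] by simp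
    have "a \<in> \<real>" by (rule herm_real[OF A sym eva])
    then have ar: "a = of_real (Re a)" by (simp add: complex_is_Real_iff)
    have "poly (char_poly ?Ac) (of_real (Re a)) = 0" using \<open>poly (char_poly ?Ac) a = 0\<close> ar by simp
    then have "of_real (poly (char_poly A) (Re a)) = (0::complex)"
      using of_real_hom.char_poly_hom[OF A] of_real_hom.poly_map_poly by metis
    then have "poly (char_poly A) (Re a) = 0" by simp
    then have "eigenvalue A (Re a)" using eigenvalue_root_char_poly[OF A] by simp
    then have "Re a = 0" by (rule ev0)
    then show "a = 0" using ar by simp
  qed
  obtain B P Q where sd: "schur_decomposition ?Ac as = (B,P,Q)" by (cases "schur_decomposition ?Ac as") auto
  note sch0 = schur_decomposition[OF Ac cp sd]
  have sch: "similar_mat_wit ?Ac B P Q" "upper_triangular B" "diag_mat B = as"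
    using conjunct1[OF sch0] conjunct1[OF conjunct2[OF sch0]] conjunct2[OF conjunct2[OF sch0]] by - assumption+
  have dr: "dim_row ?Ac = n" using A by simp
  have sub: "{?Ac,B,P,Q} \<subseteq> carrier_mat n n" using sch(1) unfolding similar_mat_wit_def Let_def dr by (elim conjE)
  have BPQ: "B \<in> carrier_mat n n" "P \<in> carrier_mat n n" "Q \<in> carrier_mat n n"
    using sub by (simp_all only: insert_subset)
  have su: "B $$ (i,j) = 0" if "i < n" "j < n" "j \<le> i" for i j
  proof (cases "j = i")
    case True
    have "B $$ (i,i) = diag_mat B ! i" using that BPQ unfolding diag_mat_def by simp
    also have "\<dots> \<in> set (diag_mat B)" using that BPQ unfolding diag_mat_def by (intro nth_mem) simp
    also have "\<dots> = set as" unfolding sch(3) ..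
    finally show ?thesis using as0 True by blast
  next
    case False
    have "j < i" using False that by simp
    moreover have "i < dim_row B" using that BPQ by simp
    ultimately show ?thesis by (rule upper_triangularD[OF sch(2)])
  qed
  have Bn: "B ^\<^sub>m n = 0\<^sub>m n n"
    by (rule eq_matI) (use strict_upper_pow[OF BPQ(1) su] BPQ(1) in auto)
  have "?Ac ^\<^sub>m n = P * B ^\<^sub>m n * Q" using similar_mat_wit_pow_id[OF sch(1)] .
  also have "\<dots> = 0\<^sub>m n n" unfolding Bn using BPQ by simp
  finally have Acn: "?Ac ^\<^sub>m n = 0\<^sub>m n n" .
  have "map_mat complex_of_real (A ^\<^sub>m n) = ?Ac ^\<^sub>m n" by (rule of_real_hom.mat_hom_pow[OF A])
  then have mm: "map_mat complex_of_real (A ^\<^sub>m n) = 0\<^sub>m n n" using Acn by simp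
  show ?thesis
  proof (rule eq_matI)
    fix i j assume "i < dim_row (0\<^sub>m n n :: real mat)" "j < dim_col (0\<^sub>m n n :: real mat)"
    then have ij: "i < n" "j < n" by auto
    have "map_mat complex_of_real (A ^\<^sub>m n) $$ (i,j) = 0" using mm ij by simp
    then show "(A ^\<^sub>m n) $$ (i,j) = 0\<^sub>m n n $$ (i,j)" using ij A by simp
  qed (use A in auto)
qed


context lsetup begin

lemma Mm_sym: assumes "i < m" "j < m" shows "Mm $$ (i,j) = Mm $$ (j,i)"
  using assms Wb_sym[OF assms] Pm_sym[OF assms] by simp

lemma own_piv_eq: assumes g: "goodpair i j" and s: "s < m"
  shows "own (piv i j s) = (if own s = i \<and> var s \<in> ind N EI i j then j
     else if own s = j \<and> var s \<in> ind N EI i j then i else own s)"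
proof -
  have gi: "i \<in> {1..N}" "j \<in> {1..N}" "i \<noteq> j" using g goodpair_def by auto
  show ?thesis
  proof (cases "own s = i \<and> var s \<in> ind N EI i j")
    case True
    then have "var s \<in> cn j" using ind_cn by blast
    then show ?thesis using True ownvar_pos[OF gi(2)] unfolding piv_def by simp
  next
    case F1: False
    show ?thesis
    proof (cases "own s = j \<and> var s \<in> ind N EI i j")
      case True
      then have "var s \<in> cn i" using ind_cn by blast
      then show ?thesis using True F1 gi ownvar_pos[OF gi(1)] unfolding piv_def by simp
    next
      case False
      have p: "piv i j s = s" unfolding piv_def by (simp only: if_not_P[OF F1] if_not_P[OF False])
      show ?thesis by (simp only: p if_not_P[OF F1] if_not_P[OF False])
    qed
  qed
qed

lemma Mm_zero_entries: assumes z: "\<forall>v\<in>carrier_vec m. Mm *\<^sub>v v = 0\<^sub>v m" and i: "i < m" and j: "j < m"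
  shows "Mm $$ (i,j) = 0"
proof -
  have "(Mm *\<^sub>v unit_vec m j) $ i = (\<Sum>k\<in>{0..<m}. Mm $$ (i,k) * unit_vec m j $ k)"
    by (rule mv_idx[OF Mm_carrier unit_vec_carrier i])
  also have "\<dots> = (\<Sum>k\<in>{0..<m}. if k = j then Mm $$ (i,k) else 0)"
    by (rule sum.cong[OF refl]) (use j in auto)
  also have "\<dots> = Mm $$ (i,j)" using j by simp
  finally show ?thesis using z i by simp
qed

lemma S_ne: "\<exists>k. eigenvalue Wb k \<and> k \<noteq> 1"
proof (rule ccontr)
  assume no: "\<not> (\<exists>k. eigenvalue Wb k \<and> k \<noteq> 1)"
  have ev0: "k = 0" if "eigenvalue Mm k" for k
  proof (rule ccontr)
    assume "k \<noteq> 0"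
    then show False using eig_Wb_of_M[OF that] no by blast
  qed
  have pw: "Mm ^\<^sub>m m = 0\<^sub>m m m" by (rule sym_eig_zero[OF Mm_carrier Mm_sym ev0])
  have mS: "Suc (m - 1) = m" using m_pos by simp
  have z: "\<forall>v\<in>carrier_vec m. Mm *\<^sub>v v = 0\<^sub>v m"
  proof
    fix v :: "real vec" assume v: "v \<in> carrier_vec m"
    have "(Mm ^\<^sub>m Suc (m - 1)) *\<^sub>v v = 0\<^sub>v m" unfolding mS pw by (rule eq_vecI) (use v in \<open>auto simp: scalar_prod_def\<close>)
    note sn = sym_nil[OF Mm_carrier _ v, of "m - 1"]
    then show "Mm *\<^sub>v v = 0\<^sub>v m" using Mm_sym \<open>(Mm ^\<^sub>m Suc (m - 1)) *\<^sub>v v = 0\<^sub>v m\<close> by blast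
  qed
  have eqWP: "Wb $$ (i,j) = Pm $$ (i,j)" if "i < m" "j < m" for i j
    using Mm_zero_entries[OF z that] that by simp
  have one: "(1::nat) \<in> {1..N}" using N2 by simp
  obtain b where b: "b \<in> nbC 1" using nbC_ne[OF one] by blast
  have gb: "goodpair 1 b" by (rule good_nbC[OF one b])
  then have b1: "b \<in> {1..N}" "b \<noteq> 1" unfolding goodpair_def by auto
  have hb1: "1 \<in> cn b" using b nbC_sub nb_sym unfolding cnbrs_def by blast
  define c :: nat where "c = (if b = 2 then 3 else 2)"
  have c: "c \<in> {1..N}" "c \<noteq> 1" "c \<noteq> b" using N3 b1 unfolding c_def by auto
  obtain d where d: "d \<in> nbC c" using nbC_ne[OF c(1)] by blast
  have p0: "(c,d) \<in> Pr" unfolding Pr_def using c(1) d by simp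
  have gcd: "goodpair c d" by (rule good_nbC[OF c(1) d])
  define r where "r = pos 1 1"
  define r' where "r' = pos b 1"
  have rr: "r < m" "own r = 1" "var r = 1" unfolding r_def
    using pos_lt_m[OF one self_cn] ownvar_pos[OF one self_cn] by auto
  have rr': "r' < m" "own r' = b" "var r' = 1" unfolding r'_def
    using pos_lt_m[OF b1(1) hb1] ownvar_pos[OF b1(1) hb1] by auto
  have ne: "r' \<noteq> r" using rr rr' b1 by auto
  have Peq: "Pm $$ (r,r) - Pm $$ (r,r') = 0" using rr rr' by (simp add: Pm_idx)
  have dif: "Wb $$ (r,r) - Wb $$ (r,r') = (\<Sum>p\<in>Pr. w (fst p) * (Wf (pv p) $$ (r,r) - Wf (pv p) $$ (r,r')))"
    unfolding Wb_idx[OF rr(1) rr(1)] Wb_idx[OF rr(1) rr'(1)]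
    by (simp add: right_diff_distrib sum_subtractf)
  have trm: "Wf (pv p) $$ (r,r) - Wf (pv p) $$ (r,r') = (1 + of_bool (r = pv p r) - of_bool (r' = pv p r)) / 2" for p
    using rr(1) rr'(1) ne by (simp add: Wf_idx diff_divide_distrib)
  have "0 < (\<Sum>p\<in>Pr. w (fst p) * (Wf (pv p) $$ (r,r) - Wf (pv p) $$ (r,r')))"
  proof (rule sum_pos2[OF fin_Pr p0])
    have "own (piv c d r) \<noteq> b" using own_piv_eq[OF gcd rr(1)] rr(2) c b1 by auto
    then have "r' \<noteq> piv c d r" using rr'(2) by auto
    then have "0 < Wf (piv c d) $$ (r,r) - Wf (piv c d) $$ (r,r')" using trm[of "(c,d)"] by (cases "r = piv c d r") simp_all
    then show "0 < w (fst (c,d)) * (Wf (pv (c,d)) $$ (r,r) - Wf (pv (c,d)) $$ (r,r'))"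
      using w_pos[OF p0] by simp
  next
    fix p assume p: "p \<in> Pr"
    have "0 \<le> Wf (pv p) $$ (r,r) - Wf (pv p) $$ (r,r')" using trm[of p]
      by (cases "r = pv p r"; cases "r' = pv p r") simp_all
    then show "0 \<le> w (fst p) * (Wf (pv p) $$ (r,r) - Wf (pv p) $$ (r,r'))"
      using w_pos[OF p] by simp
  qed
  then have "0 < Wb $$ (r,r) - Wb $$ (r,r')" using dif by simp
  then show False using eqWP[OF rr(1) rr(1)] eqWP[OF rr(1) rr'(1)] Peq by simp
qed

lemma fin_eig: "finite {k. eigenvalue Wb k}"
proof -
  have "coeff (char_poly Wb) m = 1" using degree_monic_char_poly[OF E_carrier] by simp
  then have "char_poly Wb \<noteq> 0" by auto
  then have "finite {k. poly (char_poly Wb) k = 0}" by (rule poly_roots_finite)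
  moreover have "{k. eigenvalue Wb k} = {k. poly (char_poly Wb) k = 0}"
    using eigenvalue_root_char_poly[OF E_carrier] by simp
  ultimately show ?thesis by simp
qed

lemma lmax_Wb: "lambda_max Wb = 1"
  unfolding lambda_max_def
proof (rule Max_eqI[OF fin_eig])
  show "y \<le> 1" if "y \<in> {k. eigenvalue Wb k}" for y using eig_bounds(2) that by simp
  have "Wb *\<^sub>v ones = 1 \<cdot>\<^sub>v ones" using Wb_ones by simp
  then show "1 \<in> {k. eigenvalue Wb k}" unfolding eigenvalue_def eigenvector_def using ones_ne
    by (simp, intro exI[of _ ones]) simp
qed

lemma lmax_M: "lambda_max Mm = lambda_2 Wb"
proof -
  define S where "S = {k. eigenvalue Wb k \<and> k \<noteq> 1}"
  have eqs: "{k. eigenvalue Mm k} = insert 0 S"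
  proof (rule Set.set_eqI)
    fix k
    show "k \<in> {k. eigenvalue Mm k} \<longleftrightarrow> k \<in> insert 0 S"
      unfolding S_def using eig_M_0 eig_M_of_Wb eig_Wb_of_M by auto
  qed
  have finS: "finite S" using fin_eig unfolding S_def by (rule rev_finite_subset) auto
  have neS: "S \<noteq> {}" using S_ne unfolding S_def by auto
  have nn: "0 \<le> Max S" using Max_in[OF finS neS] eig_bounds(1) unfolding S_def by auto
  have "lambda_max Mm = Max (insert 0 S)" unfolding lambda_max_def eqs ..
  also have "\<dots> = max 0 (Max S)" by (rule Max_insert[OF finS neS])
  also have "\<dots> = Max S" using nn by simp
  also have "\<dots> = lambda_2 Wb" unfolding lambda_2_def S_def ..
  finally show ?thesis .
qed

end

theorem lemma9:
  fixes N :: nat and EI EC Em :: "nat set set"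
  assumes "N \<ge> 2"
    and "simple_graph N EI"
    and "graph_connected N EI"
    and "\<not> graph_complete N EI"
    and "max_triangle_free_spanning EI Em"
    and "Em \<subseteq> EC" and "EC \<subseteq> EI"
  defines "Wb \<equiv> expect N EC (mtot N EI) (Wmat N EI)"
  shows "doubly_stochastic Wb \<and> lambda_max Wb = 1 \<and>
         lambda_max (expect N EC (mtot N EI) (\<lambda>i j. (Qmat N EI i j)\<^sup>T * Qmat N EI i j))
           = lambda_2 Wb"
proof -
  interpret L: lsetup N EI EC Em using assms(1-7) by unfold_locales
  show ?thesis unfolding Wb_def L.M_eq using L.ds L.lmax_Wb L.lmax_M by simp
qed


end
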